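(* Let $G=(V,E)$ be a finite graph with $m=|E|\ge3$ edges, $p\in(0,1)$ and $q\in\mathbb N$. Let $\tilde P_{\rm SW}$ and $P_{\rm SB}$ be the transition matrices of the Swendsen--Wang dynamics and of the single-bond dynamics, respectively, for the random-cluster model on $G$ with parameters $p$ and $q$. Then \[ \lambda(P_{\rm SB})\;\le\;\lambda(\tilde P_{\rm SW})\;\le\;8\,m\log m\;\lambda(P_{\rm SB}). \]
   Context: Graphs are finite, parallel edges and loops allowed; each edge $e$ has endvertices $e^{(1)},e^{(2)}$. For $A\subseteq E$, $c(A)$ is the number of connected components of $(V,A)$, and $u\overset{A}{\leftrightarrow}v$ means $u,v$ are connected in $(V,A)$. For $\sigma\in\{1,\dots,q\}^V$, $E(\sigma)$ is the set of edges whose endvertices have the same color. Random-cluster measure: $\mu(A)\propto\bigl(\tfrac{p}{1-p}\bigr)^{|A|}q^{c(A)}$ on subsets $A\subseteq E$. Swendsen--Wang dynamics for the RC model: $\tilde P_{\rm SW}(A,B)=q^{-c(A)}\bigl(\tfrac{p}{1-p}\bigr)^{|B|}\sum_{\sigma\in\{1,\dots,q\}^V}(1-p)^{|E(\sigma)|}\mathbf 1(A\cup B\subseteq E(\sigma))$ (color each component of $(V,A)$ independently uniformly, then keep each edge of $E(\sigma)$ independently with probability $p$). Single-bond dynamics: $P_{\rm SB}(A,B)=\frac1{|E|}\sum_{e\in E}g_e(A,B)$ where $g_e(A,B)=p$ if $B=A\cup\{e\}$ and $e^{(1)}\overset{A}{\leftrightarrow}e^{(2)}$; $1-p$ if $B=A\setminus\{e\}$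 and $e^{(1)}\overset{A}{\leftrightarrow}e^{(2)}$; $p/q$ if $B=A\cup\{e\}$ and $e^{(1)},e^{(2)}$ are not connected in $(V,A)$; $1-p/q$ if $B=A\setminus\{e\}$ and they are not connected; $0$ otherwise. Both are reversible w.r.t. $\mu$. Spectral gap: $\lambda(P)=1-\max\{|\xi|:\xi\text{ eigenvalue of }P,\ \xi\neq1\}$; $\log$ is the natural logarithm. *)

theory Defs
  imports "HOL-Analysis.Analysis"
begin

text \<open>Finite multigraph: vertex set V, edge set E, endpoint maps end1, end2
  (parallel edges and loops allowed).\<close>

definition edge_rel :: "('e \<Rightarrow> 'v) \<Rightarrow> ('e \<Rightarrow> 'v) \<Rightarrow> 'e set \<Rightarrow> ('v \<times> 'v) set" where
  "edge_rel end1 end2 A = {(end1 e, end2 e) | e. e \<in> A} \<union> {(end2 e, end1 e) | e. e \<in> A}"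

definition conn :: "('e \<Rightarrow> 'v) \<Rightarrow> ('e \<Rightarrow> 'v) \<Rightarrow> 'e set \<Rightarrow> 'v \<Rightarrow> 'v \<Rightarrow> bool" where
  "conn end1 end2 A u v \<longleftrightarrow> (u, v) \<in> (edge_rel end1 end2 A)\<^sup>*"

definition ncomp :: "'v set \<Rightarrow> ('e \<Rightarrow> 'v) \<Rightarrow> ('e \<Rightarrow> 'v) \<Rightarrow> 'e set \<Rightarrow> nat" where
  "ncomp V end1 end2 A = card (V // ((edge_rel end1 end2 A)\<^sup>* \<inter> (V \<times> V)))"

definition mono_edges :: "'e set \<Rightarrow> ('e \<Rightarrow> 'v) \<Rightarrow> ('e \<Rightarrow> 'v) \<Rightarrow> ('v \<Rightarrow> nat) \<Rightarrow> 'e set" where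
  "mono_edges E end1 end2 \<sigma> = {e \<in> E. \<sigma> (end1 e) = \<sigma> (end2 e)}"

definition P_SW :: "'v set \<Rightarrow> 'e set \<Rightarrow> ('e \<Rightarrow> 'v) \<Rightarrow> ('e \<Rightarrow> 'v) \<Rightarrow> real \<Rightarrow> nat
    \<Rightarrow> 'e set \<Rightarrow> 'e set \<Rightarrow> real" where
  "P_SW V E end1 end2 p q A B =
     (1 / real q) ^ ncomp V end1 end2 A * (p / (1 - p)) ^ card B *
     (\<Sum>\<sigma> \<in> PiE V (\<lambda>_. {1..q}).
        (1 - p) ^ card (mono_edges E end1 end2 \<sigma>) *
        (if A \<union> B \<subseteq> mono_edges E end1 end2 \<sigma> then 1 else 0))"

definition g_edge :: "('e \<Rightarrow> 'v) \<Rightarrow> ('e \<Rightarrow> 'v) \<Rightarrow> real \<Rightarrow> nat \<Rightarrow> 'e \<Rightarrow> 'e set \<Rightarrow> 'e set \<Rightarrow> real" where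
  "g_edge end1 end2 p q e A B =
     (if B = A \<union> {e} \<and> conn end1 end2 A (end1 e) (end2 e) then p
      else if B = A - {e} \<and> conn end1 end2 A (end1 e) (end2 e) then 1 - p
      else if B = A \<union> {e} \<and> \<not> conn end1 end2 A (end1 e) (end2 e) then p / real q
      else if B = A - {e} \<and> \<not> conn end1 end2 A (end1 e) (end2 e) then 1 - p / real q
      else 0)"

definition P_SB :: "'e set \<Rightarrow> ('e \<Rightarrow> 'v) \<Rightarrow> ('e \<Rightarrow> 'v) \<Rightarrow> real \<Rightarrow> nat
    \<Rightarrow> 'e set \<Rightarrow> 'e set \<Rightarrow> real" where
  "P_SB E end1 end2 p q A B = (1 / real (card E)) * (\<Sum>e \<in> E. g_edge end1 end2 p q e A B)"

definition is_eigenvalue :: "'s set \<Rightarrow> ('s \<Rightarrow> 's \<Rightarrow> real) \<Rightarrow> complex \<Rightarrow> bool" where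
  "is_eigenvalue S P \<xi> \<longleftrightarrow>
     (\<exists>f :: 's \<Rightarrow> complex. (\<exists>x \<in> S. f x \<noteq> 0) \<and>
        (\<forall>x \<in> S. (\<Sum>y \<in> S. complex_of_real (P x y) * f y) = \<xi> * f x))"

definition spectral_gap :: "'s set \<Rightarrow> ('s \<Rightarrow> 's \<Rightarrow> real) \<Rightarrow> real" where
  "spectral_gap S P = 1 - Max {cmod \<xi> | \<xi>. is_eigenvalue S P \<xi> \<and> \<xi> \<noteq> 1}"

end

theory Submission
  imports Defs "Jordan_Normal_Form.Spectral_Radius"
begin

lemma eig_finite:
  assumes "finite S"
  shows "finite {\<xi>. is_eigenvalue S P \<xi>}"
proof -
  obtain h where h: "bij_betw h {0..<card S} S" using ex_bij_betw_nat_finite[OF assms] by blast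
  define n where "n = card S"
  define A :: "complex mat" where "A = mat n n (\<lambda>(i,j). complex_of_real (P (h i) (h j)))"
  have A: "A \<in> carrier_mat n n" unfolding A_def by simp
  have "{\<xi>. is_eigenvalue S P \<xi>} \<subseteq> spectrum A"
  proof
    fix \<xi> assume "\<xi> \<in> {\<xi>. is_eigenvalue S P \<xi>}"
    then obtain f where f0: "\<exists>x\<in>S. f x \<noteq> 0"
      and fe: "\<forall>x\<in>S. (\<Sum>y\<in>S. complex_of_real (P x y) * f y) = \<xi> * f x"
      unfolding is_eigenvalue_def by blast
    define v where "v = vec n (\<lambda>i. f (h i))"
    from f0 obtain x where x: "x \<in> S" "f x \<noteq> 0" by blast
    have "x \<in> h ` {0..<n}" using h x unfolding bij_betw_def n_def by simp
    then obtain i where i: "i < n" "h i = x" by auto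
    have v0: "v \<noteq> 0\<^sub>v n"
    proof
      assume "v = 0\<^sub>v n"
      hence "v $ i = 0" using i by simp
      thus False using i x unfolding v_def by simp
    qed
    have mv: "A *\<^sub>v v = \<xi> \<cdot>\<^sub>v v"
    proof (rule eq_vecI)
      fix i assume i: "i < dim_vec (\<xi> \<cdot>\<^sub>v v)"
      hence i': "i < n" unfolding v_def by simp
      have "(A *\<^sub>v v) $ i = (\<Sum>j\<in>{0..<n}. complex_of_real (P (h i) (h j)) * f (h j))"
        using i' unfolding A_def v_def by (simp add: scalar_prod_def)
      also have "\<dots> = (\<Sum>y\<in>S. complex_of_real (P (h i) y) * f y)"
        using sum.reindex_bij_betw[OF h, of "\<lambda>y. complex_of_real (P (h i) y) * f y"]
        unfolding n_def by simp
      also have "\<dots> = \<xi> * f (h i)" using fe h i' unfolding n_def bij_betw_def by auto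
      finally show "(A *\<^sub>v v) $ i = (\<xi> \<cdot>\<^sub>v v) $ i" using i' unfolding v_def by simp
    qed (simp add: A_def v_def)
    have "eigenvector A v \<xi>" unfolding eigenvector_def using v0 mv A
      by (simp add: v_def A_def)
    thus "\<xi> \<in> spectrum A" unfolding spectrum_def eigenvalue_def by blast
  qed
  thus ?thesis using card_finite_spectrum(1)[OF A] finite_subset by blast
qed

definition Bf :: "'s set \<Rightarrow> ('s \<Rightarrow> real) \<Rightarrow> ('s \<Rightarrow> 's \<Rightarrow> real) \<Rightarrow> ('s \<Rightarrow> real) \<Rightarrow> ('s \<Rightarrow> real) \<Rightarrow> real" where
  "Bf S \<mu> P f g = (\<Sum>x\<in>S. \<Sum>y\<in>S. \<mu> x * f x * P x y * g y)"

definition ip :: "'s set \<Rightarrow> ('s \<Rightarrow> real) \<Rightarrow> ('s \<Rightarrow> real) \<Rightarrow> ('s \<Rightarrow> real) \<Rightarrow> real" where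
  "ip S \<mu> f g = (\<Sum>x\<in>S. \<mu> x * f x * g x)"

lemma Bf_alt: "Bf S \<mu> P f g = (\<Sum>x\<in>S. \<mu> x * f x * (\<Sum>y\<in>S. P x y * g y))"
  unfolding Bf_def by (simp add: sum_distrib_left mult.assoc)

lemma Bf_add1: "Bf S \<mu> P (\<lambda>x. f x + g x) z = Bf S \<mu> P f z + Bf S \<mu> P g z"
  unfolding Bf_def by (simp add: algebra_simps sum.distrib)
lemma Bf_add2: "Bf S \<mu> P z (\<lambda>x. f x + g x) = Bf S \<mu> P z f + Bf S \<mu> P z g"
  unfolding Bf_def by (simp add: algebra_simps sum.distrib)
lemma Bf_smult1: "Bf S \<mu> P (\<lambda>x. c * f x) z = c * Bf S \<mu> P f z"
  unfolding Bf_def by (simp add: algebra_simps sum_distrib_left)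
lemma Bf_smult2: "Bf S \<mu> P z (\<lambda>x. c * f x) = c * Bf S \<mu> P z f"
  unfolding Bf_def by (simp add: algebra_simps sum_distrib_left)
lemma ip_add1: "ip S \<mu> (\<lambda>x. f x + g x) z = ip S \<mu> f z + ip S \<mu> g z"
  unfolding ip_def by (simp add: algebra_simps sum.distrib)
lemma ip_add2: "ip S \<mu> z (\<lambda>x. f x + g x) = ip S \<mu> z f + ip S \<mu> z g"
  unfolding ip_def by (simp add: algebra_simps sum.distrib)
lemma ip_smult1: "ip S \<mu> (\<lambda>x. c * f x) z = c * ip S \<mu> f z"
  unfolding ip_def by (simp add: algebra_simps sum_distrib_left)
lemma ip_smult2: "ip S \<mu> z (\<lambda>x. c * f x) = c * ip S \<mu> z f"
  unfolding ip_def by (simp add: algebra_simps sum_distrib_left)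
lemma ip_comm: "ip S \<mu> f g = ip S \<mu> g f"
  unfolding ip_def by (simp add: algebra_simps)

lemma Bf_cong: "(\<And>x. x \<in> S \<Longrightarrow> f x = f' x) \<Longrightarrow> (\<And>x. x \<in> S \<Longrightarrow> g x = g' x) \<Longrightarrow>
  Bf S \<mu> P f g = Bf S \<mu> P f' g'"
  unfolding Bf_def by (intro sum.cong) auto
lemma ip_cong: "(\<And>x. x \<in> S \<Longrightarrow> f x = f' x) \<Longrightarrow> (\<And>x. x \<in> S \<Longrightarrow> g x = g' x) \<Longrightarrow>
  ip S \<mu> f g = ip S \<mu> f' g'"
  unfolding ip_def by (intro sum.cong) auto

lemma ip_pos:
  assumes "finite S" "\<forall>x\<in>S. \<mu> x > 0" "\<exists>x\<in>S. f x \<noteq> 0"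
  shows "0 < ip S \<mu> f f"
proof -
  from assms obtain x where x: "x \<in> S" "f x \<noteq> 0" by blast
  show ?thesis unfolding ip_def
    by (rule sum_pos2[OF assms(1) x(1)])
       (use x assms(2) in \<open>auto simp: mult.assoc zero_less_mult_iff zero_le_mult_iff\<close>)
qed

lemma ip_zero:
  assumes "finite S" "\<forall>x\<in>S. \<mu> x > 0" "ip S \<mu> f f = 0"
  shows "\<forall>x\<in>S. f x = 0"
  using ip_pos[OF assms(1,2), of f] assms(3) by auto

lemma quad_zero:
  fixes a b :: real
  assumes "\<forall>t. a * t + b * t^2 \<le> 0"
  shows "a = 0"
proof (rule ccontr)
  assume a: "a \<noteq> 0"
  define c where "c = \<bar>b\<bar> + 1"
  have c: "c > 0" unfolding c_def by simp
  have h: "a * (a / (2*c)) + b * (a/(2*c))^2 \<le> 0" using assms by blast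
  have "a * (a / (2*c)) + b * (a/(2*c))^2 = a^2 * (2*c + b) / (4*c^2)"
    using c by (simp add: field_simps power2_eq_square)
  moreover have "a^2 * (2*c + b) / (4*c^2) > 0"
    using a c unfolding c_def by (intro divide_pos_pos mult_pos_pos) auto
  ultimately show False using h by simp
qed

lemma coord_cont: "continuous_on A (\<lambda>f::'s\<Rightarrow>real. f x)"
  by (rule continuous_on_subset[OF continuous_on_product_coordinates]) simp

lemma Bf_cont: "continuous_on A (\<lambda>f. Bf S \<mu> P f f)"
  unfolding Bf_def by (intro continuous_intros coord_cont)

lemma normalize:
  assumes fin: "finite S" and mu: "\<forall>x\<in>S. \<mu> x > 0"
    and f1: "ip S \<mu> (\<lambda>_. 1) f = 0" and nz: "\<exists>x\<in>S. f x \<noteq> 0"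
  defines "s \<equiv> ip S \<mu> f f"
  defines "f' \<equiv> (\<lambda>x. if x \<in> S then f x / sqrt s else 0)"
  shows "s > 0" "ip S \<mu> (\<lambda>_. 1) f' = 0" "ip S \<mu> f' f' = 1" "\<forall>x. x \<notin> S \<longrightarrow> f' x = 0"
    "Bf S \<mu> P f' f' = Bf S \<mu> P f f / s"
proof -
  show s: "s > 0" unfolding s_def using ip_pos[OF fin mu nz] .
  have e: "\<And>x. x \<in> S \<Longrightarrow> f' x = (1 / sqrt s) * f x" unfolding f'_def by simp
  have "ip S \<mu> (\<lambda>_. 1) f' = ip S \<mu> (\<lambda>_. 1) (\<lambda>x. (1 / sqrt s) * f x)" by (rule ip_cong) (auto simp: e)
  also have "\<dots> = 0" using f1 by (subst ip_smult2) simp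
  finally show "ip S \<mu> (\<lambda>_. 1) f' = 0" .
  have "ip S \<mu> f' f' = ip S \<mu> (\<lambda>x. (1 / sqrt s) * f x) (\<lambda>x. (1 / sqrt s) * f x)" by (rule ip_cong) (auto simp: e)
  also have "\<dots> = (1 / sqrt s) * (1 / sqrt s) * s" unfolding ip_smult1 ip_smult2 s_def by simp
  also have "\<dots> = 1" using s by (simp add: real_sqrt_mult[symmetric])
  finally show "ip S \<mu> f' f' = 1" .
  show "\<forall>x. x \<notin> S \<longrightarrow> f' x = 0" unfolding f'_def by simp
  have "Bf S \<mu> P f' f' = Bf S \<mu> P (\<lambda>x. (1 / sqrt s) * f x) (\<lambda>x. (1 / sqrt s) * f x)" by (rule Bf_cong) (auto simp: e)
  also have "\<dots> = (1 / sqrt s) * (1 / sqrt s) * Bf S \<mu> P f f" unfolding Bf_smult1 Bf_smult2 by simp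
  also have "\<dots> = Bf S \<mu> P f f / s" using s by (simp add: real_sqrt_mult[symmetric])
  finally show "Bf S \<mu> P f' f' = Bf S \<mu> P f f / s" .
qed

lemma exists_max:
  assumes fin: "finite S" and mu: "\<forall>x\<in>S. \<mu> x > 0"
    and ntriv: "\<exists>f. ip S \<mu> (\<lambda>_. 1) f = 0 \<and> (\<exists>x\<in>S. f x \<noteq> 0)"
  shows "\<exists>g. ip S \<mu> (\<lambda>_. 1) g = 0 \<and> ip S \<mu> g g = 1 \<and>
     (\<forall>f. ip S \<mu> (\<lambda>_. 1) f = 0 \<longrightarrow> Bf S \<mu> P f f \<le> Bf S \<mu> P g g * ip S \<mu> f f)"
proof -
  define r where "r = 1 + (\<Sum>x\<in>S. 1 / \<mu> x)"
  define T where "T = (\<lambda>x. if x \<in> S then cball (0::real) r else {0})"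
  have "compactin (product_topology (\<lambda>_. euclidean) UNIV) (PiE UNIV T)"
    by (subst compactin_PiE) (auto simp: T_def)
  hence c0: "compact (PiE UNIV T)" by (metis euclidean_product_topology compactin_euclidean_iff)
  define K where "K = PiE UNIV T \<inter> {f. ip S \<mu> (\<lambda>_. 1) f = 0} \<inter> {f. ip S \<mu> f f = 1}"
  have ct1: "continuous_on UNIV (\<lambda>f. ip S \<mu> (\<lambda>_. 1) f)"
    unfolding ip_def by (intro continuous_intros coord_cont)
  have ct2: "continuous_on UNIV (\<lambda>f. ip S \<mu> f f)"
    unfolding ip_def by (intro continuous_intros coord_cont)
  have cl1: "closed {f. ip S \<mu> (\<lambda>_. 1) f = 0}"
    by (rule closed_Collect_eq[OF ct1 continuous_on_const])
  have cl2: "closed {f. ip S \<mu> f f = 1}"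
    by (rule closed_Collect_eq[OF ct2 continuous_on_const])
  have cK: "compact K" unfolding K_def Int_assoc
    by (rule compact_Int_closed[OF c0 closed_Int[OF cl1 cl2]])
  have inK: "f \<in> K" if f1: "ip S \<mu> (\<lambda>_. 1) f = 0" and f2: "ip S \<mu> f f = 1"
      and f3: "\<forall>x. x \<notin> S \<longrightarrow> f x = 0" for f
  proof -
    have "f x \<in> T x" for x
    proof (cases "x \<in> S")
      case True
      have "\<mu> x * f x * f x \<le> ip S \<mu> f f" unfolding ip_def
        by (rule member_le_sum[OF True _ fin])
           (use mu in \<open>auto simp: mult.assoc zero_le_mult_iff less_imp_le\<close>)
      hence "\<mu> x * (f x)^2 \<le> 1" using f2 by (simp add: power2_eq_square mult.assoc)
      hence sq: "(f x)^2 \<le> 1 / \<mu> x" using mu True by (simp add: field_simps)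
      have "1 / \<mu> x \<le> (\<Sum>x\<in>S. 1 / \<mu> x)"
        by (rule member_le_sum[OF True _ fin]) (use mu in auto)
      hence le: "(f x)^2 \<le> r - 1" using sq unfolding r_def by simp
      have "\<bar>f x\<bar> \<le> r"
      proof (cases "\<bar>f x\<bar> \<le> 1")
        case True thus ?thesis using le zero_le_power2[of "f x"] by linarith
      next
        case False
        hence "\<bar>f x\<bar> * 1 \<le> \<bar>f x\<bar> * \<bar>f x\<bar>" by (intro mult_left_mono) auto
        hence "\<bar>f x\<bar> \<le> (f x)^2" by (simp add: power2_eq_square)
        thus ?thesis using le by simp
      qed
      thus ?thesis using True unfolding T_def by (simp add: dist_real_def)
    next
      case False thus ?thesis using f3 unfolding T_def by simp
    qed
    thus ?thesis unfolding K_def using f1 f2 by (simp add: PiE_iff)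
  qed
  from ntriv obtain f0 where f0: "ip S \<mu> (\<lambda>_. 1) f0 = 0" "\<exists>x\<in>S. f0 x \<noteq> 0" by blast
  note N0 = normalize[OF fin mu f0]
  have "K \<noteq> {}" using inK[OF N0(2,3,4)] by blast
  then obtain g where gK: "g \<in> K" and gmax: "\<forall>f\<in>K. Bf S \<mu> P f f \<le> Bf S \<mu> P g g"
    using continuous_attains_sup[OF cK _ Bf_cont] by blast
  have g1: "ip S \<mu> (\<lambda>_. 1) g = 0" and g2: "ip S \<mu> g g = 1" using gK unfolding K_def by auto
  have "Bf S \<mu> P f f \<le> Bf S \<mu> P g g * ip S \<mu> f f" if f1: "ip S \<mu> (\<lambda>_. 1) f = 0" for f
  proof (cases "\<exists>x\<in>S. f x \<noteq> 0")
    case True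
    note N = normalize[OF fin mu f1 True]
    have "Bf S \<mu> P f f / ip S \<mu> f f \<le> Bf S \<mu> P g g"
      using gmax inK[OF N(2,3,4)] N(5) by fastforce
    thus ?thesis using N(1) by (simp add: divide_le_eq mult.commute)
  next
    case False
    hence "Bf S \<mu> P f f = 0" "ip S \<mu> f f = 0" unfolding Bf_def ip_def by auto
    thus ?thesis by simp
  qed
  thus ?thesis using g1 g2 by blast
qed


lemma spectral:
  assumes fin: "finite S" and mu: "\<forall>x\<in>S. \<mu> x > 0"
    and sym: "\<forall>f g. Bf S \<mu> P f g = Bf S \<mu> P g f"
    and pone: "\<forall>f. Bf S \<mu> P f (\<lambda>_. 1) = ip S \<mu> (\<lambda>_. 1) f"
    and psd: "\<forall>f. 0 \<le> Bf S \<mu> P f f"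
    and irr: "\<forall>f. ip S \<mu> (\<lambda>_. 1) f = 0 \<longrightarrow> (\<exists>x\<in>S. f x \<noteq> 0) \<longrightarrow> Bf S \<mu> P f f < ip S \<mu> f f"
    and ntriv: "\<exists>f. ip S \<mu> (\<lambda>_. 1) f = 0 \<and> (\<exists>x\<in>S. f x \<noteq> 0)"
  shows "\<exists>\<rho>. spectral_gap S P = 1 - \<rho> \<and> 0 \<le> \<rho> \<and> \<rho> < 1 \<and>
     (\<forall>f. ip S \<mu> (\<lambda>_. 1) f = 0 \<longrightarrow> Bf S \<mu> P f f \<le> \<rho> * ip S \<mu> f f) \<and>
     (\<exists>g. ip S \<mu> (\<lambda>_. 1) g = 0 \<and> (\<exists>x\<in>S. g x \<noteq> 0) \<and> Bf S \<mu> P g g = \<rho> * ip S \<mu> g g)"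
proof -
  obtain g where g1: "ip S \<mu> (\<lambda>_. 1) g = 0" and g2: "ip S \<mu> g g = 1"
    and MAX0: "\<forall>f. ip S \<mu> (\<lambda>_. 1) f = 0 \<longrightarrow> Bf S \<mu> P f f \<le> Bf S \<mu> P g g * ip S \<mu> f f"
    using exists_max[OF fin mu ntriv] by blast
  define \<rho> where "\<rho> = Bf S \<mu> P g g"
  have MAX: "\<And>f. ip S \<mu> (\<lambda>_. 1) f = 0 \<Longrightarrow> Bf S \<mu> P f f \<le> \<rho> * ip S \<mu> f f"
    using MAX0 unfolding \<rho>_def by blast
  have gnz: "\<exists>x\<in>S. g x \<noteq> 0"
  proof (rule ccontr)
    assume "\<not> ?thesis"
    hence "ip S \<mu> g g = 0" unfolding ip_def by auto
    thus False using g2 by simp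
  qed
  have Pone: "\<And>f. Bf S \<mu> P f (\<lambda>_. 1) = ip S \<mu> (\<lambda>_. 1) f"
    using pone by blast
  have var: "Bf S \<mu> P g h = \<rho> * ip S \<mu> g h" if h1: "ip S \<mu> (\<lambda>_. 1) h = 0" for h
  proof -
    let ?a = "2 * (Bf S \<mu> P g h - \<rho> * ip S \<mu> g h)"
    let ?b = "Bf S \<mu> P h h - \<rho> * ip S \<mu> h h"
    have "?a * t + ?b * t^2 \<le> 0" for t
    proof -
      have "ip S \<mu> (\<lambda>_. 1) (\<lambda>x. g x + t * h x) = 0"
        using g1 h1 by (simp add: ip_add2 ip_smult2)
      hence M: "Bf S \<mu> P (\<lambda>x. g x + t * h x) (\<lambda>x. g x + t * h x)
          \<le> \<rho> * ip S \<mu> (\<lambda>x. g x + t * h x) (\<lambda>x. g x + t * h x)" by (rule MAX)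
      have e1: "Bf S \<mu> P (\<lambda>x. g x + t * h x) (\<lambda>x. g x + t * h x)
          = \<rho> + 2 * t * Bf S \<mu> P g h + t^2 * Bf S \<mu> P h h"
        unfolding Bf_add1 Bf_add2 Bf_smult1 Bf_smult2 \<rho>_def using sym
        by (simp add: power2_eq_square algebra_simps)
      have e2: "ip S \<mu> (\<lambda>x. g x + t * h x) (\<lambda>x. g x + t * h x)
          = 1 + 2 * t * ip S \<mu> g h + t^2 * ip S \<mu> h h"
        unfolding ip_add1 ip_add2 ip_smult1 ip_smult2 using g2 ip_comm[of S \<mu> h g]
        by (simp add: power2_eq_square algebra_simps)
      show ?thesis using M unfolding e1 e2 by (simp add: algebra_simps)
    qed
    hence "?a = 0" using quad_zero by blast
    thus ?thesis by simp
  qed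
  define r where "r = (\<lambda>x. if x \<in> S then (\<Sum>y\<in>S. P x y * g y) - \<rho> * g x else 0)"
  have ipr: "ip S \<mu> h r = Bf S \<mu> P h g - \<rho> * ip S \<mu> h g" for h
  proof -
    have "ip S \<mu> h r = (\<Sum>x\<in>S. \<mu> x * h x * (\<Sum>y\<in>S. P x y * g y) - \<rho> * (\<mu> x * h x * g x))"
      unfolding ip_def r_def by (intro sum.cong) (auto simp: algebra_simps)
    thus ?thesis unfolding Bf_alt ip_def by (simp add: sum_subtractf sum_distrib_left)
  qed
  have r1: "ip S \<mu> (\<lambda>_. 1) r = 0"
    unfolding ipr using sym Pone g1 by (simp add: ip_comm)
  have "ip S \<mu> r r = 0"
    unfolding ipr using var[OF r1] sym ip_comm[of S \<mu> r g] by simp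
  hence r0: "\<forall>x\<in>S. r x = 0" using ip_zero[OF fin mu] by blast
  have eig: "\<forall>x\<in>S. (\<Sum>y\<in>S. P x y * g y) = \<rho> * g x" using r0 unfolding r_def by auto
  have rho1: "\<rho> < 1" using irr g1 gnz g2 unfolding \<rho>_def by auto
  have rho0: "0 \<le> \<rho>" using psd unfolding \<rho>_def by auto
  define EV where "EV = {cmod \<xi> | \<xi>. is_eigenvalue S P \<xi> \<and> \<xi> \<noteq> 1}"
  have finEV: "finite EV" unfolding EV_def
    using eig_finite[OF fin, of P] by (simp add: Setcompr_eq_image)
  have rhoEV: "\<rho> \<in> EV"
  proof -
    have "is_eigenvalue S P (complex_of_real \<rho>)" unfolding is_eigenvalue_def
    proof (intro exI[of _ "\<lambda>x. complex_of_real (g x)"] conjI ballI)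
      show "\<exists>x\<in>S. complex_of_real (g x) \<noteq> 0" using gnz by simp
      fix x assume x: "x \<in> S"
      have "(\<Sum>y\<in>S. complex_of_real (P x y) * complex_of_real (g y))
          = complex_of_real (\<Sum>y\<in>S. P x y * g y)" by simp
      also have "\<dots> = complex_of_real \<rho> * complex_of_real (g x)" using eig x by simp
      finally show "(\<Sum>y\<in>S. complex_of_real (P x y) * complex_of_real (g y))
          = complex_of_real \<rho> * complex_of_real (g x)" .
    qed
    moreover have "complex_of_real \<rho> \<noteq> 1" using rho1 by simp
    moreover have "cmod (complex_of_real \<rho>) = \<rho>" using rho0 by simp
    ultimately show ?thesis unfolding EV_def by force
  qed
  have leEV: "y \<le> \<rho>" if "y \<in> EV" for y
  proof -
    from that obtain \<xi> where y: "y = cmod \<xi>" and ev: "is_eigenvalue S P \<xi>" and n1: "\<xi> \<noteq> 1"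
      unfolding EV_def by blast
    from ev obtain f where fnz: "\<exists>x\<in>S. f x \<noteq> 0"
      and fe: "\<forall>x\<in>S. (\<Sum>y\<in>S. complex_of_real (P x y) * f y) = \<xi> * f x"
      unfolding is_eigenvalue_def by blast
    define u where "u = (\<lambda>x. Re (f x))"
    define v where "v = (\<lambda>x. Im (f x))"
    define a where "a = Re \<xi>"
    define b where "b = Im \<xi>"
    have PU: "\<forall>x\<in>S. (\<Sum>y\<in>S. P x y * u y) = a * u x - b * v x"
    proof
      fix x assume x: "x \<in> S"
      have "Re (\<Sum>y\<in>S. complex_of_real (P x y) * f y) = Re (\<xi> * f x)" using fe x by simp
      thus "(\<Sum>y\<in>S. P x y * u y) = a * u x - b * v x"
        unfolding u_def v_def a_def b_def by (simp add: Re_sum)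
    qed
    have PV: "\<forall>x\<in>S. (\<Sum>y\<in>S. P x y * v y) = b * u x + a * v x"
    proof
      fix x assume x: "x \<in> S"
      have "Im (\<Sum>y\<in>S. complex_of_real (P x y) * f y) = Im (\<xi> * f x)" using fe x by simp
      thus "(\<Sum>y\<in>S. P x y * v y) = b * u x + a * v x"
        unfolding u_def v_def a_def b_def by (simp add: Im_sum algebra_simps)
    qed
    have Buv: "Bf S \<mu> P u v = b * ip S \<mu> u u + a * ip S \<mu> u v"
    proof -
      have "Bf S \<mu> P u v = (\<Sum>x\<in>S. \<mu> x * u x * (b * u x + a * v x))"
        unfolding Bf_alt using PV by (intro sum.cong) auto
      thus ?thesis unfolding ip_def by (simp add: algebra_simps sum.distrib sum_distrib_left)
    qed
    have Bvu: "Bf S \<mu> P v u = a * ip S \<mu> v u - b * ip S \<mu> v v"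
    proof -
      have "Bf S \<mu> P v u = (\<Sum>x\<in>S. \<mu> x * v x * (a * u x - b * v x))"
        unfolding Bf_alt using PU by (intro sum.cong) auto
      thus ?thesis unfolding ip_def by (simp add: algebra_simps sum_subtractf sum_distrib_left)
    qed
    have "b * (ip S \<mu> u u + ip S \<mu> v v) = 0"
      using Buv Bvu sym ip_comm[of S \<mu> u v] by (simp add: algebra_simps)
    moreover have "ip S \<mu> u u + ip S \<mu> v v > 0"
    proof -
      from fnz obtain x where x: "x \<in> S" "f x \<noteq> 0" by blast
      hence "u x \<noteq> 0 \<or> v x \<noteq> 0" unfolding u_def v_def using complex_eqI by force
      moreover have "ip S \<mu> u u \<ge> 0" "ip S \<mu> v v \<ge> 0"
        unfolding ip_def using mu by (auto intro!: sum_nonneg simp: mult.assoc zero_le_mult_iff)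
      ultimately show ?thesis using ip_pos[OF fin mu, of u] ip_pos[OF fin mu, of v] x by force
    qed
    ultimately have b0: "b = 0" by simp
    have xi: "\<xi> = complex_of_real a" using b0 unfolding a_def b_def by (simp add: complex_eq_iff)
    define w where "w = (if \<exists>x\<in>S. u x \<noteq> 0 then u else v)"
    have wnz: "\<exists>x\<in>S. w x \<noteq> 0"
    proof -
      from fnz obtain x where x: "x \<in> S" "f x \<noteq> 0" by blast
      hence "u x \<noteq> 0 \<or> v x \<noteq> 0" unfolding u_def v_def using complex_eqI by force
      thus ?thesis unfolding w_def using x by auto
    qed
    have PW: "\<forall>x\<in>S. (\<Sum>y\<in>S. P x y * w y) = a * w x"
      unfolding w_def using PU PV b0 by auto
    have Bw: "\<And>h. Bf S \<mu> P h w = a * ip S \<mu> h w"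
      unfolding Bf_alt ip_def using PW by (auto simp: sum_distrib_left algebra_simps intro!: sum.cong)
    have a1: "a \<noteq> 1" using n1 xi by auto
    have "a * ip S \<mu> (\<lambda>_. 1) w = ip S \<mu> (\<lambda>_. 1) w"
      using Bw[of "\<lambda>_. 1"] sym Pone[of w] by simp
    hence w1: "ip S \<mu> (\<lambda>_. 1) w = 0" using a1 by (metis mult_cancel_right2)
    have wpos: "0 < ip S \<mu> w w" using ip_pos[OF fin mu wnz] .
    have "a * ip S \<mu> w w \<le> \<rho> * ip S \<mu> w w" using MAX[OF w1] Bw[of w] by simp
    hence "a \<le> \<rho>" using wpos by simp
    moreover have "0 \<le> a * ip S \<mu> w w" using psd Bw[of w] by metis
    hence "0 \<le> a" using wpos by (simp add: zero_le_mult_iff)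
    ultimately show ?thesis unfolding y xi by simp
  qed
  have "Max EV = \<rho>" by (rule Max_eqI[OF finEV leEV rhoEV])
  hence "spectral_gap S P = 1 - \<rho>" unfolding spectral_gap_def EV_def by simp
  moreover have "Bf S \<mu> P g g = \<rho> * ip S \<mu> g g" using g2 unfolding \<rho>_def by simp
  ultimately show ?thesis using rho0 rho1 MAX g1 gnz by blast
qed

definition wt :: "real \<Rightarrow> 'e set \<Rightarrow> 'e set \<Rightarrow> real" where
  "wt p F A = p ^ card A * (1 - p) ^ (card F - card A)"

definition EF :: "real \<Rightarrow> 'e set \<Rightarrow> ('e set \<Rightarrow> real) \<Rightarrow> real" where
  "EF p F f = (\<Sum>A\<in>Pow F. wt p F A * f A)"

definition Tflip :: "real \<Rightarrow> 'e \<Rightarrow> ('e set \<Rightarrow> real) \<Rightarrow> 'e set \<Rightarrow> real" where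
  "Tflip p e f A = p * f (insert e A) + (1 - p) * f (A - {e})"

lemma EF_empty: "EF p {} f = f {}"
  unfolding EF_def wt_def by simp

lemma EF_insert:
  assumes fin: "finite F" and a: "a \<notin> F"
  shows "EF p (insert a F) f = p * EF p F (\<lambda>A. f (insert a A)) + (1 - p) * EF p F f"
proof -
  have disj: "Pow F \<inter> insert a ` Pow F = {}" using a by auto
  have inj: "inj_on (insert a) (Pow F)" using a unfolding inj_on_def by (metis PowD insert_ident subset_iff)
  have "EF p (insert a F) f = (\<Sum>A\<in>Pow F. wt p (insert a F) A * f A)
      + (\<Sum>A\<in>insert a ` Pow F. wt p (insert a F) A * f A)"
    unfolding EF_def Pow_insert using fin disj by (intro sum.union_disjoint) auto
  also have "(\<Sum>A\<in>insert a ` Pow F. wt p (insert a F) A * f A)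
      = (\<Sum>A\<in>Pow F. wt p (insert a F) (insert a A) * f (insert a A))"
    by (rule sum.reindex[OF inj, unfolded comp_def])
  also have "\<dots> = (\<Sum>A\<in>Pow F. p * (wt p F A * f (insert a A)))"
  proof (intro sum.cong refl)
    fix A assume A: "A \<in> Pow F"
    hence AF: "A \<subseteq> F" by simp
    hence "finite A" "a \<notin> A" "card A \<le> card F" using fin a finite_subset[OF AF fin] card_mono[OF fin AF] by auto
    thus "wt p (insert a F) (insert a A) * f (insert a A) = p * (wt p F A * f (insert a A))"
      unfolding wt_def using fin a by simp
  qed
  also have "(\<Sum>A\<in>Pow F. wt p (insert a F) A * f A) = (\<Sum>A\<in>Pow F. (1 - p) * (wt p F A * f A))"
  proof (intro sum.cong refl)
    fix A assume A: "A \<in> Pow F"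
    hence "card A \<le> card F" using card_mono[OF fin] by simp
    hence "card (insert a F) - card A = Suc (card F - card A)" using fin a by simp
    thus "wt p (insert a F) A * f A = (1 - p) * (wt p F A * f A)"
      unfolding wt_def by simp
  qed
  finally show ?thesis unfolding EF_def by (simp add: sum_distrib_left)
qed

lemma EF_cong: "(\<And>A. A \<subseteq> F \<Longrightarrow> f A = g A) \<Longrightarrow> EF p F f = EF p F g"
  unfolding EF_def by (intro sum.cong) auto

lemma EF_add: "EF p F (\<lambda>A. f A + g A) = EF p F f + EF p F g"
  unfolding EF_def by (simp add: algebra_simps sum.distrib)
lemma EF_diff: "EF p F (\<lambda>A. f A - g A) = EF p F f - EF p F g"
  unfolding EF_def by (simp add: algebra_simps sum_subtractf)
lemma EF_cmult: "EF p F (\<lambda>A. c * f A) = c * EF p F f"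
  unfolding EF_def by (simp add: algebra_simps sum_distrib_left)

lemma EF_one: "finite F \<Longrightarrow> EF p F (\<lambda>_. 1) = 1"
proof (induction F rule: finite_induct)
  case empty thus ?case by (simp add: EF_empty)
next
  case (insert a F) thus ?case by (simp add: EF_insert)
qed

lemma EF_const: "finite F \<Longrightarrow> EF p F (\<lambda>_. c) = c"
  using EF_cmult[of p F c "\<lambda>_. 1"] EF_one[of F p] by simp

lemma wt_nonneg: "0 \<le> p \<Longrightarrow> p \<le> 1 \<Longrightarrow> 0 \<le> wt p F A"
  unfolding wt_def by simp

lemma wt_pos: "0 < p \<Longrightarrow> p < 1 \<Longrightarrow> 0 < wt p F A"
  unfolding wt_def by simp

lemma EF_nonneg: "0 \<le> p \<Longrightarrow> p \<le> 1 \<Longrightarrow> (\<And>A. A \<subseteq> F \<Longrightarrow> 0 \<le> f A) \<Longrightarrow> 0 \<le> EF p F f"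
  unfolding EF_def by (intro sum_nonneg mult_nonneg_nonneg wt_nonneg) auto

lemma jensen:
  assumes "finite F" "0 \<le> p" "p \<le> 1"
  shows "(EF p F f)^2 \<le> EF p F (\<lambda>A. (f A)^2)"
proof -
  define c where "c = EF p F f"
  have "0 \<le> EF p F (\<lambda>A. (f A - c)^2)" using assms by (intro EF_nonneg) auto
  also have "EF p F (\<lambda>A. (f A - c)^2) = EF p F (\<lambda>A. (f A)^2 + (-2*c) * f A + c^2)"
    by (rule EF_cong) (simp add: power2_eq_square algebra_simps)
  also have "\<dots> = EF p F (\<lambda>A. (f A)^2) + (-2*c) * EF p F f + c^2"
    by (simp only: EF_add EF_cmult EF_const[OF assms(1)])
  also have "\<dots> = EF p F (\<lambda>A. (f A)^2) - c^2"
    unfolding c_def[symmetric] by (simp add: power2_eq_square)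
  finally show ?thesis unfolding c_def by simp
qed

lemma EF_zero_var:
  assumes "finite F" "0 < p" "p < 1" "EF p F (\<lambda>A. (f A)^2) = (EF p F f)^2"
  shows "\<forall>A\<subseteq>F. f A = EF p F f"
proof -
  define c where "c = EF p F f"
  have "EF p F (\<lambda>A. (f A - c)^2) = EF p F (\<lambda>A. (f A)^2 + (-2*c) * f A + c^2)"
    by (rule EF_cong) (simp add: power2_eq_square algebra_simps)
  also have "\<dots> = EF p F (\<lambda>A. (f A)^2) + (-2*c) * EF p F f + c^2"
    by (simp only: EF_add EF_cmult EF_const[OF assms(1)])
  also have "\<dots> = EF p F (\<lambda>A. (f A)^2) - c^2"
    unfolding c_def[symmetric] by (simp add: power2_eq_square)
  also have "\<dots> = 0" using assms(4) unfolding c_def by simp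
  finally have s0: "(\<Sum>A\<in>Pow F. wt p F A * (f A - c)^2) = 0" unfolding EF_def .
  have fp: "finite (Pow F)" using assms(1) by simp
  have nn: "\<And>A. A \<in> Pow F \<Longrightarrow> 0 \<le> wt p F A * (f A - c)^2"
    using wt_nonneg[of p F] assms(2,3) by simp
  have z: "\<forall>A\<in>Pow F. wt p F A * (f A - c)^2 = 0" using sum_nonneg_eq_0_iff[OF fp nn] s0 by simp
  show ?thesis
  proof (intro allI impI)
    fix A assume "A \<subseteq> F"
    hence "wt p F A * (f A - c)^2 = 0" using z by blast
    moreover have "wt p F A \<noteq> 0" using wt_pos[OF assms(2,3), of F A] by simp
    ultimately show "f A = EF p F f" unfolding c_def by simp
  qed
qed

lemma EF_split:
  assumes fin: "finite F" and e: "e \<in> F"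
  shows "EF p F g = EF p (F - {e}) (\<lambda>A. p * g (insert e A) + (1 - p) * g A)"
proof -
  have F: "F = insert e (F - {e})" using e by auto
  have "EF p F g = p * EF p (F - {e}) (\<lambda>A. g (insert e A)) + (1 - p) * EF p (F - {e}) g"
    by (subst F, rule EF_insert) (use fin in auto)
  thus ?thesis by (simp only: EF_add EF_cmult)
qed

lemma DEC:
  assumes fin: "finite F" and e: "e \<in> F"
  shows "EF p F (\<lambda>A. g A * Tflip p e h A) = EF p (F - {e})
     (\<lambda>A. (p * g (insert e A) + (1 - p) * g A) * (p * h (insert e A) + (1 - p) * h A))"
proof -
  have "EF p F (\<lambda>A. g A * Tflip p e h A) = EF p (F - {e})
     (\<lambda>A. p * (g (insert e A) * Tflip p e h (insert e A)) + (1 - p) * (g A * Tflip p e h A))"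
    by (rule EF_split[OF fin e])
  also have "\<dots> = EF p (F - {e})
     (\<lambda>A. (p * g (insert e A) + (1 - p) * g A) * (p * h (insert e A) + (1 - p) * h A))"
  proof (rule EF_cong)
    fix A assume A: "A \<subseteq> F - {e}"
    hence eA: "e \<notin> A" by auto
    have t1: "Tflip p e h (insert e A) = p * h (insert e A) + (1 - p) * h A"
      unfolding Tflip_def using eA by simp
    have t2: "Tflip p e h A = p * h (insert e A) + (1 - p) * h A"
      unfolding Tflip_def using eA by simp
    show "p * (g (insert e A) * Tflip p e h (insert e A)) + (1 - p) * (g A * Tflip p e h A)
      = (p * g (insert e A) + (1 - p) * g A) * (p * h (insert e A) + (1 - p) * h A)"
      unfolding t1 t2 by (simp add: algebra_simps)
  qed
  finally show ?thesis .
qed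

definition Tm :: "real \<Rightarrow> 'e \<Rightarrow> 'e set \<Rightarrow> ('e set \<Rightarrow> real) \<Rightarrow> 'e set \<Rightarrow> real" where
  "Tm p e F f A = (if e \<in> F then Tflip p e f A else f A)"

lemma symT:
  assumes fin: "finite F"
  shows "EF p F (\<lambda>A. g A * Tm p e F h A) = EF p F (\<lambda>A. h A * Tm p e F g A)"
proof (cases "e \<in> F")
  case True
  show ?thesis unfolding Tm_def using True DEC[OF fin True, of p g h] DEC[OF fin True, of p h g]
    by (simp add: mult.commute)
next
  case False thus ?thesis unfolding Tm_def by (simp add: mult.commute)
qed

lemma lowerT:
  assumes fin: "finite F" and p: "0 \<le> p" "p \<le> 1"
  shows "(EF p F f)^2 \<le> EF p F (\<lambda>A. f A * Tm p e F f A)"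
proof (cases "e \<in> F")
  case True
  have "(EF p F f)^2 = (EF p (F - {e}) (\<lambda>A. p * f (insert e A) + (1 - p) * f A))^2"
    using EF_split[OF fin True] by simp
  also have "\<dots> \<le> EF p (F - {e}) (\<lambda>A. (p * f (insert e A) + (1 - p) * f A)^2)"
    by (rule jensen) (use fin p in auto)
  also have "\<dots> = EF p F (\<lambda>A. f A * Tm p e F f A)"
    unfolding Tm_def using True DEC[OF fin True, of p f f] by (simp add: power2_eq_square)
  finally show ?thesis .
next
  case False
  thus ?thesis unfolding Tm_def using jensen[OF fin p, of f] by (simp add: power2_eq_square)
qed

lemma ES:
  assumes fin: "finite F" and p: "0 \<le> p" "p \<le> 1"
  shows "EF p F (\<lambda>A. (f A)^2) - (EF p F f)^2 \<le>
    (\<Sum>e\<in>F. EF p F (\<lambda>A. (f A)^2) - EF p F (\<lambda>A. f A * Tflip p e f A))"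
  using fin
proof (induction F arbitrary: f rule: finite_induct)
  case empty thus ?case by (simp add: EF_empty)
next
  case (insert a F)
  note finF = insert(1) and aF = insert(2) and IH = insert(3)
  define f1 where "f1 = (\<lambda>A. f (insert a A))"
  define X1 where "X1 = EF p F (\<lambda>A. (f1 A)^2)"
  define X0 where "X0 = EF p F (\<lambda>A. (f A)^2)"
  define m1 where "m1 = EF p F f1"
  define m0 where "m0 = EF p F f"
  define D1 where "D1 = (\<Sum>e\<in>F. EF p F (\<lambda>A. (f1 A)^2) - EF p F (\<lambda>A. f1 A * Tflip p e f1 A))"
  define D0 where "D0 = (\<Sum>e\<in>F. EF p F (\<lambda>A. (f A)^2) - EF p F (\<lambda>A. f A * Tflip p e f A))"
  have IH1: "X1 - m1^2 \<le> D1" using IH[of f1] unfolding X1_def m1_def D1_def .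
  have IH0: "X0 - m0^2 \<le> D0" using IH[of f] unfolding X0_def m0_def D0_def .
  have h1: "EF p (insert a F) (\<lambda>A. (f A)^2) = p * X1 + (1 - p) * X0"
    unfolding X1_def X0_def f1_def by (rule EF_insert[OF finF aF])
  have h2: "EF p (insert a F) f = p * m1 + (1 - p) * m0"
    unfolding m1_def m0_def f1_def by (rule EF_insert[OF finF aF])
  have h3: "EF p (insert a F) (\<lambda>A. f A * Tflip p e f A)
      = p * EF p F (\<lambda>A. f1 A * Tflip p e f1 A) + (1 - p) * EF p F (\<lambda>A. f A * Tflip p e f A)"
    if e: "e \<in> F" for e
  proof -
    have ae: "a \<noteq> e" using e aF by auto
    have "EF p (insert a F) (\<lambda>A. f A * Tflip p e f A)
      = p * EF p F (\<lambda>A. f (insert a A) * Tflip p e f (insert a A)) + (1 - p) * EF p F (\<lambda>A. f A * Tflip p e f A)"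
      by (rule EF_insert[OF finF aF])
    moreover have "(\<lambda>A. f (insert a A) * Tflip p e f (insert a A)) = (\<lambda>A. f1 A * Tflip p e f1 A)"
    proof
      fix A
      have "insert a A - {e} = insert a (A - {e})" using ae by auto
      thus "f (insert a A) * Tflip p e f (insert a A) = f1 A * Tflip p e f1 A"
        unfolding Tflip_def f1_def by (simp add: insert_commute)
    qed
    ultimately show ?thesis by simp
  qed
  have h4: "EF p (insert a F) (\<lambda>A. (f A)^2) - EF p (insert a F) (\<lambda>A. f A * Tflip p a f A)
      = p * (1 - p) * EF p F (\<lambda>A. (f1 A - f A)^2)"
  proof -
    have fi: "finite (insert a F)" using finF by simp
    have ai: "a \<in> insert a F" by simp
    have r: "insert a F - {a} = F" using aF by auto
    have "EF p (insert a F) (\<lambda>A. (f A)^2) = EF p F (\<lambda>A. p * (f1 A)^2 + (1 - p) * (f A)^2)"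
      using EF_split[OF fi ai, of p "\<lambda>A. (f A)^2"] unfolding r f1_def .
    moreover have "EF p (insert a F) (\<lambda>A. f A * Tflip p a f A)
        = EF p F (\<lambda>A. (p * f1 A + (1 - p) * f A) * (p * f1 A + (1 - p) * f A))"
      using DEC[OF fi ai, of p f f] unfolding r f1_def .
    ultimately have "EF p (insert a F) (\<lambda>A. (f A)^2) - EF p (insert a F) (\<lambda>A. f A * Tflip p a f A)
        = EF p F (\<lambda>A. (p * (f1 A)^2 + (1 - p) * (f A)^2) - (p * f1 A + (1 - p) * f A) * (p * f1 A + (1 - p) * f A))"
      by (simp only: EF_diff)
    also have "\<dots> = EF p F (\<lambda>A. (p * (1 - p)) * (f1 A - f A)^2)"
      by (rule EF_cong) (simp add: power2_eq_square algebra_simps)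
    also have "\<dots> = p * (1 - p) * EF p F (\<lambda>A. (f1 A - f A)^2)" by (simp only: EF_cmult)
    finally show ?thesis .
  qed
  have jen: "(m1 - m0)^2 \<le> EF p F (\<lambda>A. (f1 A - f A)^2)"
    using jensen[OF finF p, of "\<lambda>A. f1 A - f A"] unfolding m1_def m0_def EF_diff .
  have sumeq: "(\<Sum>e\<in>insert a F. EF p (insert a F) (\<lambda>A. (f A)^2) - EF p (insert a F) (\<lambda>A. f A * Tflip p e f A))
     = p * (1 - p) * EF p F (\<lambda>A. (f1 A - f A)^2) + (p * D1 + (1 - p) * D0)"
  proof -
    have "(\<Sum>e\<in>F. EF p (insert a F) (\<lambda>A. (f A)^2) - EF p (insert a F) (\<lambda>A. f A * Tflip p e f A))
        = (\<Sum>e\<in>F. p * (EF p F (\<lambda>A. (f1 A)^2) - EF p F (\<lambda>A. f1 A * Tflip p e f1 A))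
             + (1 - p) * (EF p F (\<lambda>A. (f A)^2) - EF p F (\<lambda>A. f A * Tflip p e f A)))"
      by (intro sum.cong refl) (simp add: h1 h3 X1_def X0_def algebra_simps)
    also have "\<dots> = p * D1 + (1 - p) * D0"
      unfolding D1_def D0_def by (simp add: sum.distrib sum_distrib_left)
    finally show ?thesis using h4 finF aF by (simp add: sum.insert)
  qed
  have var: "EF p (insert a F) (\<lambda>A. (f A)^2) - (EF p (insert a F) f)^2
      = p * (X1 - m1^2) + (1 - p) * (X0 - m0^2) + p * (1 - p) * (m1 - m0)^2"
    unfolding h1 h2 by (simp add: power2_eq_square algebra_simps)
  have pp: "0 \<le> p * (1 - p)" using p by simp
  have "p * (X1 - m1^2) \<le> p * D1" using IH1 p by (intro mult_left_mono) auto
  moreover have "(1 - p) * (X0 - m0^2) \<le> (1 - p) * D0" using IH0 p by (intro mult_left_mono) auto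
  moreover have "p * (1 - p) * (m1 - m0)^2 \<le> p * (1 - p) * EF p F (\<lambda>A. (f1 A - f A)^2)"
    using jen pp by (intro mult_left_mono) auto
  ultimately show ?case unfolding sumeq var by linarith
qed

locale rc =
  fixes V :: "'v set" and E :: "'e set" and end1 end2 :: "'e \<Rightarrow> 'v" and p :: real and q :: nat
  assumes finV: "finite V" and finE: "finite E"
    and ends: "\<forall>e \<in> E. end1 e \<in> V \<and> end2 e \<in> V"
    and p0: "0 < p" and p1: "p < 1" and q1: "q \<ge> 1" and Ene: "E \<noteq> {}"
begin

definition "Col = PiE V (\<lambda>_. {1..q})"
definition "FF \<sigma> = mono_edges E end1 end2 \<sigma>"
definition "ColA A = {\<sigma> \<in> Col. A \<subseteq> FF \<sigma>}"
definition "RR A = (edge_rel end1 end2 A)\<^sup>* \<inter> V \<times> V"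

lemma finCol: "finite Col" unfolding Col_def using finV by (intro finite_PiE) auto
lemma finColA: "finite (ColA A)" unfolding ColA_def using finCol by simp

lemma FF_sub: "FF \<sigma> \<subseteq> E" unfolding FF_def mono_edges_def by auto

lemma in_FF: "e \<in> FF \<sigma> \<longleftrightarrow> e \<in> E \<and> \<sigma> (end1 e) = \<sigma> (end2 e)"
  unfolding FF_def mono_edges_def by auto

lemma compat:
  assumes "A \<subseteq> FF \<sigma>" "(x, y) \<in> (edge_rel end1 end2 A)\<^sup>*"
  shows "\<sigma> x = \<sigma> y"
  using assms(2)
proof (induction rule: rtrancl_induct)
  case base thus ?case by simp
next
  case (step y z)
  from step(2) obtain e where e: "e \<in> A" "(y = end1 e \<and> z = end2 e) \<or> (y = end2 e \<and> z = end1 e)"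
    unfolding edge_rel_def by blast
  hence "\<sigma> (end1 e) = \<sigma> (end2 e)" using assms(1) in_FF by blast
  thus ?case using step(3) e by auto
qed

lemma equivRR: "A \<subseteq> E \<Longrightarrow> equiv V (RR A)"
proof -
  have sym0: "sym (edge_rel end1 end2 A)" unfolding edge_rel_def sym_def by blast
  show "equiv V (RR A)" unfolding equiv_def RR_def
  proof (intro conjI)
    show "refl_on V ((edge_rel end1 end2 A)\<^sup>* \<inter> V \<times> V)" unfolding refl_on_def by auto
    show "sym ((edge_rel end1 end2 A)\<^sup>* \<inter> V \<times> V)"
      using sym_rtrancl[OF sym0] unfolding sym_def by blast
    show "trans ((edge_rel end1 end2 A)\<^sup>* \<inter> V \<times> V)"
    proof (rule transI)
      fix x y z assume "(x, y) \<in> (edge_rel end1 end2 A)\<^sup>* \<inter> V \<times> V"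
        "(y, z) \<in> (edge_rel end1 end2 A)\<^sup>* \<inter> V \<times> V"
      thus "(x, z) \<in> (edge_rel end1 end2 A)\<^sup>* \<inter> V \<times> V"
        using rtrancl_trans[of x y "edge_rel end1 end2 A" z] by simp
    qed
  qed auto
qed

lemma ColA_char:
  assumes AE: "A \<subseteq> E"
  shows "ColA A = {\<sigma> \<in> Col. \<forall>x y. (x, y) \<in> RR A \<longrightarrow> \<sigma> x = \<sigma> y}"
proof -
  have 1: "\<sigma> \<in> Col \<and> (\<forall>x y. (x, y) \<in> RR A \<longrightarrow> \<sigma> x = \<sigma> y)" if "\<sigma> \<in> ColA A" for \<sigma>
    using that unfolding ColA_def RR_def using compat by blast
  have 2: "\<sigma> \<in> ColA A" if s: "\<sigma> \<in> Col" "\<forall>x y. (x, y) \<in> RR A \<longrightarrow> \<sigma> x = \<sigma> y" for \<sigma>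
  proof -
    have "A \<subseteq> FF \<sigma>"
    proof
      fix e assume e: "e \<in> A"
      have "(end1 e, end2 e) \<in> edge_rel end1 end2 A" unfolding edge_rel_def using e by blast
      moreover have "end1 e \<in> V" "end2 e \<in> V" using ends e AE by auto
      ultimately have "(end1 e, end2 e) \<in> RR A" unfolding RR_def by auto
      thus "e \<in> FF \<sigma>" using s e AE in_FF by auto
    qed
    thus "\<sigma> \<in> ColA A" using s unfolding ColA_def by simp
  qed
  show ?thesis using 1 2 by blast
qed

end

context rc begin
definition "phi A \<tau> = (\<lambda>x\<in>V. \<tau> (RR A `` {x}))"
definition "psi A \<sigma> = (\<lambda>C\<in>V // RR A. \<sigma> (SOME x. x \<in> C))"

lemma bij_phi:
  assumes AE: "A \<subseteq> E"
  shows "bij_betw (phi A) (PiE (V // RR A) (\<lambda>_. {1..q})) (ColA A)"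
proof (rule bij_betw_byWitness[where f' = "psi A"])
  have eq: "equiv V (RR A)" using equivRR[OF AE] .
  have some: "(SOME y. y \<in> RR A `` {x}) \<in> RR A `` {x}" if "x \<in> V" for x
    using eq that by (metis equiv_class_self someI_ex)
  have someR: "(x, SOME y. y \<in> RR A `` {x}) \<in> RR A" if "x \<in> V" for x
    using some[OF that] by simp
  have cls: "RR A `` {SOME y. y \<in> RR A `` {x}} = RR A `` {x}" if "x \<in> V" for x
    by (rule equiv_class_eq[OF eq someR[OF that], symmetric])
  have someV: "(SOME y. y \<in> RR A `` {x}) \<in> V" if "x \<in> V" for x
    using someR[OF that] unfolding RR_def by auto
  show "\<forall>\<tau>\<in>PiE (V // RR A) (\<lambda>_. {1..q}). psi A (phi A \<tau>) = \<tau>"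
  proof
    fix \<tau> assume t: "\<tau> \<in> PiE (V // RR A) (\<lambda>_. {1..q})"
    show "psi A (phi A \<tau>) = \<tau>"
    proof
      fix C show "psi A (phi A \<tau>) C = \<tau> C"
      proof (cases "C \<in> V // RR A")
        case True
        then obtain x where x: "x \<in> V" "C = RR A `` {x}" by (rule quotientE)
        show ?thesis unfolding psi_def phi_def using True x someV[OF x(1)] cls[OF x(1)] by simp
      next
        case False thus ?thesis unfolding psi_def using t by (auto simp: PiE_def extensional_def)
      qed
    qed
  qed
  show "\<forall>\<sigma>\<in>ColA A. phi A (psi A \<sigma>) = \<sigma>"
  proof
    fix \<sigma> assume s: "\<sigma> \<in> ColA A"
    hence sc: "\<forall>x y. (x, y) \<in> RR A \<longrightarrow> \<sigma> x = \<sigma> y" "\<sigma> \<in> Col" using ColA_char[OF AE] by auto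
    show "phi A (psi A \<sigma>) = \<sigma>"
    proof
      fix x show "phi A (psi A \<sigma>) x = \<sigma> x"
      proof (cases "x \<in> V")
        case True
        have "RR A `` {x} \<in> V // RR A" using True by (rule quotientI)
        thus ?thesis unfolding phi_def psi_def using True sc(1) someR[OF True] by auto
      next
        case False thus ?thesis unfolding phi_def using sc(2) unfolding Col_def
          by (auto simp: PiE_def extensional_def)
      qed
    qed
  qed
  show "phi A ` PiE (V // RR A) (\<lambda>_. {1..q}) \<subseteq> ColA A"
  proof
    fix \<sigma> assume "\<sigma> \<in> phi A ` PiE (V // RR A) (\<lambda>_. {1..q})"
    then obtain \<tau> where t: "\<tau> \<in> PiE (V // RR A) (\<lambda>_. {1..q})" and s: "\<sigma> = phi A \<tau>" by blast
    have "\<sigma> \<in> Col" unfolding Col_def s phi_def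
      using t by (auto simp: PiE_iff intro: quotientI)
    moreover have "\<forall>x y. (x, y) \<in> RR A \<longrightarrow> \<sigma> x = \<sigma> y"
    proof (intro allI impI)
      fix x y assume xy: "(x, y) \<in> RR A"
      hence "x \<in> V" "y \<in> V" unfolding RR_def by auto
      moreover have "RR A `` {x} = RR A `` {y}" using equiv_class_eq[OF eq xy] .
      ultimately show "\<sigma> x = \<sigma> y" unfolding s phi_def by simp
    qed
    ultimately show "\<sigma> \<in> ColA A" using ColA_char[OF AE] by simp
  qed
  show "psi A ` ColA A \<subseteq> PiE (V // RR A) (\<lambda>_. {1..q})"
  proof
    fix \<tau> assume "\<tau> \<in> psi A ` ColA A"
    then obtain \<sigma> where s: "\<sigma> \<in> ColA A" and t: "\<tau> = psi A \<sigma>" by blast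
    have sC: "\<sigma> \<in> Col" using s unfolding ColA_def by simp
    show "\<tau> \<in> PiE (V // RR A) (\<lambda>_. {1..q})"
    proof (rule PiE_I)
      fix C assume C: "C \<in> V // RR A"
      then obtain x where x: "x \<in> V" "C = RR A `` {x}" by (rule quotientE)
      have "\<sigma> (SOME y. y \<in> C) \<in> {1..q}" using sC someV[OF x(1)] x(2) unfolding Col_def by auto
      thus "\<tau> C \<in> {1..q}" unfolding t psi_def using C by simp
    next
      fix C assume "C \<notin> V // RR A" thus "\<tau> C = undefined" unfolding t psi_def by simp
    qed
  qed
qed

lemma finQ: "finite (V // RR A)"
  using finV unfolding quotient_def by auto

lemma card_ColA:
  assumes AE: "A \<subseteq> E"
  shows "card (ColA A) = q ^ ncomp V end1 end2 A"
proof -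
  have "card (ColA A) = card (PiE (V // RR A) (\<lambda>_. {1..q}))"
    using bij_betw_same_card[OF bij_phi[OF AE]] by simp
  also have "\<dots> = q ^ card (V // RR A)" using finQ by (simp add: card_PiE)
  finally show ?thesis unfolding ncomp_def RR_def .
qed

lemma ColA_insert:
  assumes eE: "e \<in> E"
  shows "ColA (insert e A) = {\<sigma> \<in> ColA A. \<sigma> (end1 e) = \<sigma> (end2 e)}"
  unfolding ColA_def using in_FF eE by auto

lemma conn_case:
  assumes AE: "A \<subseteq> E" and eE: "e \<in> E" and c: "conn end1 end2 A (end1 e) (end2 e)"
  shows "ColA (insert e A) = ColA A"
  unfolding ColA_insert[OF eE] using c compat unfolding conn_def ColA_def by blast

lemma nconn_case:
  assumes AE: "A \<subseteq> E" and eE: "e \<in> E" and c: "\<not> conn end1 end2 A (end1 e) (end2 e)"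
  shows "q * card (ColA (insert e A)) = card (ColA A)"
proof -
  define K where "K = V // RR A"
  define C1 where "C1 = RR A `` {end1 e}"
  define C2 where "C2 = RR A `` {end2 e}"
  have e12: "end1 e \<in> V" "end2 e \<in> V" using ends eE by auto
  have eq: "equiv V (RR A)" using equivRR[OF AE] .
  have C1K: "C1 \<in> K" unfolding C1_def K_def using e12 by (intro quotientI)
  have C2K: "C2 \<in> K" unfolding C2_def K_def using e12 by (intro quotientI)
  have C12: "C1 \<noteq> C2"
  proof
    assume "C1 = C2"
    hence "(end1 e, end2 e) \<in> RR A" unfolding C1_def C2_def
      using eq e12 by (metis eq_equiv_class_iff)
    thus False using c unfolding conn_def RR_def by auto
  qed
  define PI where "PI = PiE K (\<lambda>_. {1..q})"
  define B where "B = {\<tau> \<in> PI. \<tau> C1 = \<tau> C2}"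
  have bij: "bij_betw (phi A) PI (ColA A)" using bij_phi[OF AE] unfolding PI_def K_def .
  have phi_e: "phi A \<tau> (end1 e) = \<tau> C1" "phi A \<tau> (end2 e) = \<tau> C2" for \<tau>
    unfolding phi_def C1_def C2_def using e12 by auto
  have img: "ColA (insert e A) = phi A ` B"
  proof -
    have "ColA (insert e A) = {\<sigma> \<in> ColA A. \<sigma> (end1 e) = \<sigma> (end2 e)}" by (rule ColA_insert[OF eE])
    also have "\<dots> = phi A ` B"
    proof
      show "{\<sigma> \<in> ColA A. \<sigma> (end1 e) = \<sigma> (end2 e)} \<subseteq> phi A ` B"
      proof
        fix \<sigma> assume s: "\<sigma> \<in> {\<sigma> \<in> ColA A. \<sigma> (end1 e) = \<sigma> (end2 e)}"
        then obtain \<tau> where t: "\<tau> \<in> PI" "\<sigma> = phi A \<tau>" using bij unfolding bij_betw_def by auto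
        have "\<sigma> (end1 e) = \<sigma> (end2 e)" using s by simp
        hence "\<tau> C1 = \<tau> C2" using t(2) phi_e[of \<tau>] by simp
        hence "\<tau> \<in> B" unfolding B_def using t by simp
        thus "\<sigma> \<in> phi A ` B" using t by auto
      qed
      show "phi A ` B \<subseteq> {\<sigma> \<in> ColA A. \<sigma> (end1 e) = \<sigma> (end2 e)}"
      proof
        fix \<sigma> assume "\<sigma> \<in> phi A ` B"
        then obtain \<tau> where t: "\<tau> \<in> B" "\<sigma> = phi A \<tau>" by blast
        have "\<sigma> \<in> ColA A" using t bij unfolding B_def bij_betw_def by auto
        moreover have "\<sigma> (end1 e) = \<sigma> (end2 e)"
          using t phi_e[of \<tau>] unfolding B_def by simp
        ultimately show "\<sigma> \<in> {\<sigma> \<in> ColA A. \<sigma> (end1 e) = \<sigma> (end2 e)}" by simp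
      qed
    qed
    finally show ?thesis .
  qed
  have "card (ColA (insert e A)) = card B"
    unfolding img by (rule card_image) (use bij in \<open>auto simp: bij_betw_def B_def intro: inj_on_subset\<close>)
  moreover have "card PI = card (B \<times> {1..q})"
  proof (rule bij_betw_same_card[of "\<lambda>\<tau>. (\<tau>(C2 := \<tau> C1), \<tau> C2)"])
    show "bij_betw (\<lambda>\<tau>. (\<tau>(C2 := \<tau> C1), \<tau> C2)) PI (B \<times> {1..q})"
    proof (rule bij_betw_byWitness[where f' = "\<lambda>(\<tau>, k). \<tau>(C2 := k)"])
      show "\<forall>\<tau>\<in>PI. (\<lambda>(\<tau>, k). \<tau>(C2 := k)) (\<tau>(C2 := \<tau> C1), \<tau> C2) = \<tau>" by simp
      show "\<forall>x\<in>B \<times> {1..q}. (\<lambda>\<tau>. (\<tau>(C2 := \<tau> C1), \<tau> C2)) ((\<lambda>(\<tau>, k). \<tau>(C2 := k)) x) = x"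
        using C12 unfolding B_def by auto
      show "(\<lambda>\<tau>. (\<tau>(C2 := \<tau> C1), \<tau> C2)) ` PI \<subseteq> B \<times> {1..q}"
        using C12 C1K C2K unfolding B_def PI_def by (auto simp: PiE_iff extensional_def)
      show "(\<lambda>(\<tau>, k). \<tau>(C2 := k)) ` (B \<times> {1..q}) \<subseteq> PI"
        using C2K unfolding B_def PI_def by (auto simp: PiE_iff extensional_def)
    qed
  qed
  hence "card PI = card B * q" by (simp add: card_cartesian_product)
  moreover have "card PI = card (ColA A)" using bij_betw_same_card[OF bij] .
  ultimately show ?thesis by (simp add: mult.commute)
qed

end

context rc begin

definition "cc \<sigma> = (1 - p) ^ (card E - card (FF \<sigma>))"
definition "KK A = p ^ card A * (1 - p) ^ (card E - card A)"
definition "mu A = (\<Sum>\<sigma>\<in>Col. if A \<subseteq> FF \<sigma> then cc \<sigma> * wt p (FF \<sigma>) A else 0)"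

lemma finFF: "finite (FF \<sigma>)" using finite_subset[OF FF_sub finE] .

lemma cc_nonneg: "0 \<le> cc \<sigma>" unfolding cc_def using p1 by simp

lemma cw: assumes "A \<subseteq> FF \<sigma>" shows "cc \<sigma> * wt p (FF \<sigma>) A = KK A"
proof -
  have a: "card A \<le> card (FF \<sigma>)" using card_mono[OF finFF assms] .
  have b: "card (FF \<sigma>) \<le> card E" using card_mono[OF finE FF_sub] .
  have "card E - card A = (card E - card (FF \<sigma>)) + (card (FF \<sigma>) - card A)" using a b by simp
  thus ?thesis unfolding cc_def wt_def KK_def by (simp add: power_add algebra_simps)
qed

lemma mu_eq: "mu A = real (card (ColA A)) * KK A"
proof -
  have "mu A = (\<Sum>\<sigma>\<in>Col. if A \<subseteq> FF \<sigma> then KK A else 0)"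
    unfolding mu_def by (intro sum.cong) (auto simp: cw)
  also have "\<dots> = (\<Sum>\<sigma>\<in>ColA A. KK A)"
    unfolding ColA_def by (rule sum.inter_filter[OF finCol, symmetric])
  finally show ?thesis by simp
qed

lemma KK_pos: "0 < KK A" unfolding KK_def using p0 p1 by simp

lemma mu_pos: assumes "A \<subseteq> E" shows "0 < mu A"
proof -
  have "card (ColA A) = q ^ ncomp V end1 end2 A" by (rule card_ColA[OF assms])
  moreover have "0 < q ^ ncomp V end1 end2 A" using q1 by simp
  ultimately show ?thesis unfolding mu_eq using KK_pos[of A] q1 by (simp add: zero_less_mult_iff)
qed

lemma EF_ext: "(\<Sum>A\<in>Pow E. if A \<subseteq> FF \<sigma> then wt p (FF \<sigma>) A * h A else 0) = EF p (FF \<sigma>) h"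
proof -
  have "{A \<in> Pow E. A \<subseteq> FF \<sigma>} = Pow (FF \<sigma>)" using FF_sub by auto
  thus ?thesis unfolding EF_def using sum.inter_filter[OF finite_Pow_iff[THEN iffD2, OF finE],
    of "\<lambda>A. wt p (FF \<sigma>) A * h A" "\<lambda>A. A \<subseteq> FF \<sigma>"] by simp
qed

lemma sum_mu: "(\<Sum>A\<in>Pow E. mu A * h A) = (\<Sum>\<sigma>\<in>Col. cc \<sigma> * EF p (FF \<sigma>) h)"
proof -
  have "(\<Sum>A\<in>Pow E. mu A * h A) = (\<Sum>A\<in>Pow E. \<Sum>\<sigma>\<in>Col. if A \<subseteq> FF \<sigma> then cc \<sigma> * (wt p (FF \<sigma>) A * h A) else 0)"
    unfolding mu_def sum_distrib_right by (intro sum.cong refl) (simp add: algebra_simps)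
  also have "\<dots> = (\<Sum>\<sigma>\<in>Col. \<Sum>A\<in>Pow E. if A \<subseteq> FF \<sigma> then cc \<sigma> * (wt p (FF \<sigma>) A * h A) else 0)"
    by (rule sum.swap)
  also have "\<dots> = (\<Sum>\<sigma>\<in>Col. cc \<sigma> * (\<Sum>A\<in>Pow E. if A \<subseteq> FF \<sigma> then wt p (FF \<sigma>) A * h A else 0))"
    unfolding sum_distrib_left by (intro sum.cong refl) simp
  finally show ?thesis unfolding EF_ext .
qed

lemma ip_mu: "ip (Pow E) mu f g = (\<Sum>\<sigma>\<in>Col. cc \<sigma> * EF p (FF \<sigma>) (\<lambda>A. f A * g A))"
  unfolding ip_def sum_mu[symmetric] by (simp add: mult.assoc)

lemma pw_aux: assumes "b \<le> f" shows "(p / (1 - p)) ^ b * (1 - p) ^ f = p ^ b * (1 - p) ^ (f - b)"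
proof -
  have "(1 - p) ^ f = (1 - p) ^ b * (1 - p) ^ (f - b)" using assms by (simp add: power_add[symmetric])
  moreover have "(p / (1 - p)) ^ b * (1 - p) ^ b = p ^ b" using p1 by (simp add: power_divide)
  ultimately show ?thesis by (metis mult.assoc)
qed

lemma SW_pw:
  assumes A: "A \<subseteq> E" and B: "B \<subseteq> E"
  shows "mu A * P_SW V E end1 end2 p q A B
    = (\<Sum>\<sigma>\<in>Col. if A \<subseteq> FF \<sigma> \<and> B \<subseteq> FF \<sigma> then cc \<sigma> * wt p (FF \<sigma>) A * wt p (FF \<sigma>) B else 0)"
proof -
  let ?c = "ncomp V end1 end2 A"
  have qq: "real (card (ColA A)) * (1 / real q) ^ ?c = 1"
    using card_ColA[OF A] q1 by (simp add: power_one_over)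
  have "mu A * P_SW V E end1 end2 p q A B = KK A * (p / (1 - p)) ^ card B *
      (\<Sum>\<sigma>\<in>Col. (1 - p) ^ card (FF \<sigma>) * (if A \<union> B \<subseteq> FF \<sigma> then 1 else 0))"
    unfolding mu_eq P_SW_def Col_def[symmetric] FF_def[symmetric] using qq
    by (simp add: algebra_simps)
  also have "\<dots> = (\<Sum>\<sigma>\<in>Col. if A \<subseteq> FF \<sigma> \<and> B \<subseteq> FF \<sigma> then cc \<sigma> * wt p (FF \<sigma>) A * wt p (FF \<sigma>) B else 0)"
    unfolding sum_distrib_left
  proof (intro sum.cong refl)
    fix \<sigma> assume "\<sigma> \<in> Col"
    show "KK A * (p / (1 - p)) ^ card B * ((1 - p) ^ card (FF \<sigma>) * (if A \<union> B \<subseteq> FF \<sigma> then 1 else 0))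
      = (if A \<subseteq> FF \<sigma> \<and> B \<subseteq> FF \<sigma> then cc \<sigma> * wt p (FF \<sigma>) A * wt p (FF \<sigma>) B else 0)"
    proof (cases "A \<subseteq> FF \<sigma> \<and> B \<subseteq> FF \<sigma>")
      case True
      have b: "card B \<le> card (FF \<sigma>)" using card_mono[OF finFF] True by simp
      have e1: "cc \<sigma> * wt p (FF \<sigma>) A = KK A" using cw[of A \<sigma>] True by simp
      have e2: "wt p (FF \<sigma>) B = (p / (1 - p)) ^ card B * (1 - p) ^ card (FF \<sigma>)"
        unfolding wt_def using pw_aux[OF b] by simp
      have "cc \<sigma> * wt p (FF \<sigma>) A * wt p (FF \<sigma>) B = KK A * ((p / (1 - p)) ^ card B * (1 - p) ^ card (FF \<sigma>))"
        unfolding e1 e2 ..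
      thus ?thesis using True by (simp add: mult.assoc)
    next
      case False thus ?thesis by auto
    qed
  qed
  finally show ?thesis .
qed

lemma Bf_SW: "Bf (Pow E) mu (P_SW V E end1 end2 p q) f g
   = (\<Sum>\<sigma>\<in>Col. cc \<sigma> * (EF p (FF \<sigma>) f * EF p (FF \<sigma>) g))"
proof -
  have "Bf (Pow E) mu (P_SW V E end1 end2 p q) f g
    = (\<Sum>A\<in>Pow E. \<Sum>B\<in>Pow E. \<Sum>\<sigma>\<in>Col. (if A \<subseteq> FF \<sigma> \<and> B \<subseteq> FF \<sigma>
        then cc \<sigma> * wt p (FF \<sigma>) A * wt p (FF \<sigma>) B else 0) * (f A * g B))"
    unfolding Bf_def
  proof (intro sum.cong refl)
    fix A B assume "A \<in> Pow E" "B \<in> Pow E"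
    hence "mu A * P_SW V E end1 end2 p q A B = (\<Sum>\<sigma>\<in>Col. if A \<subseteq> FF \<sigma> \<and> B \<subseteq> FF \<sigma>
        then cc \<sigma> * wt p (FF \<sigma>) A * wt p (FF \<sigma>) B else 0)" using SW_pw by auto
    have "mu A * f A * P_SW V E end1 end2 p q A B * g B = (mu A * P_SW V E end1 end2 p q A B) * (f A * g B)"
      by (simp add: algebra_simps)
    also note \<open>mu A * P_SW V E end1 end2 p q A B = _\<close>
    finally show "mu A * f A * P_SW V E end1 end2 p q A B * g B = (\<Sum>\<sigma>\<in>Col. (if A \<subseteq> FF \<sigma> \<and> B \<subseteq> FF \<sigma>
        then cc \<sigma> * wt p (FF \<sigma>) A * wt p (FF \<sigma>) B else 0) * (f A * g B))"
      by (simp add: sum_distrib_right)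
  qed
  also have "\<dots> = (\<Sum>A\<in>Pow E. \<Sum>\<sigma>\<in>Col. \<Sum>B\<in>Pow E. (if A \<subseteq> FF \<sigma> \<and> B \<subseteq> FF \<sigma>
        then cc \<sigma> * wt p (FF \<sigma>) A * wt p (FF \<sigma>) B else 0) * (f A * g B))"
    by (intro sum.cong refl sum.swap)
  also have "\<dots> = (\<Sum>\<sigma>\<in>Col. \<Sum>A\<in>Pow E. \<Sum>B\<in>Pow E. (if A \<subseteq> FF \<sigma> \<and> B \<subseteq> FF \<sigma>
        then cc \<sigma> * wt p (FF \<sigma>) A * wt p (FF \<sigma>) B else 0) * (f A * g B))"
    by (rule sum.swap)
  also have "\<dots> = (\<Sum>\<sigma>\<in>Col. cc \<sigma> * ((\<Sum>A\<in>Pow E. if A \<subseteq> FF \<sigma> then wt p (FF \<sigma>) A * f A else 0)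
      * (\<Sum>B\<in>Pow E. if B \<subseteq> FF \<sigma> then wt p (FF \<sigma>) B * g B else 0)))"
  proof (intro sum.cong refl)
    fix \<sigma> assume "\<sigma> \<in> Col"
    have "cc \<sigma> * ((\<Sum>A\<in>Pow E. if A \<subseteq> FF \<sigma> then wt p (FF \<sigma>) A * f A else 0)
      * (\<Sum>B\<in>Pow E. if B \<subseteq> FF \<sigma> then wt p (FF \<sigma>) B * g B else 0))
      = (\<Sum>A\<in>Pow E. \<Sum>B\<in>Pow E. cc \<sigma> * ((if A \<subseteq> FF \<sigma> then wt p (FF \<sigma>) A * f A else 0)
          * (if B \<subseteq> FF \<sigma> then wt p (FF \<sigma>) B * g B else 0)))"
      by (subst sum_product) (simp only: sum_distrib_left)
    also have "\<dots> = (\<Sum>A\<in>Pow E. \<Sum>B\<in>Pow E. (if A \<subseteq> FF \<sigma> \<and> B \<subseteq> FF \<sigma>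
        then cc \<sigma> * wt p (FF \<sigma>) A * wt p (FF \<sigma>) B else 0) * (f A * g B))"
      by (intro sum.cong refl) auto
    finally show "(\<Sum>A\<in>Pow E. \<Sum>B\<in>Pow E. (if A \<subseteq> FF \<sigma> \<and> B \<subseteq> FF \<sigma>
        then cc \<sigma> * wt p (FF \<sigma>) A * wt p (FF \<sigma>) B else 0) * (f A * g B))
      = cc \<sigma> * ((\<Sum>A\<in>Pow E. if A \<subseteq> FF \<sigma> then wt p (FF \<sigma>) A * f A else 0)
      * (\<Sum>B\<in>Pow E. if B \<subseteq> FF \<sigma> then wt p (FF \<sigma>) B * g B else 0))" by simp
  qed
  finally show ?thesis unfolding EF_ext .
qed

end

context rc begin

lemma sum2:
  assumes A: "A \<subseteq> E" and e: "e \<in> E"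
  shows "(\<Sum>B\<in>Pow E. g_edge end1 end2 p q e A B * h B)
    = g_edge end1 end2 p q e A (insert e A) * h (insert e A) + g_edge end1 end2 p q e A (A - {e}) * h (A - {e})"
proof -
  let ?T = "{insert e A, A - {e}}"
  have T: "?T \<subseteq> Pow E" using A e by auto
  have z: "\<forall>B\<in>Pow E - ?T. g_edge end1 end2 p q e A B * h B = 0"
    unfolding g_edge_def by auto
  have "(\<Sum>B\<in>Pow E. g_edge end1 end2 p q e A B * h B) = (\<Sum>B\<in>?T. g_edge end1 end2 p q e A B * h B)"
    using finE T z by (intro sum.mono_neutral_right) auto
  moreover have "insert e A \<noteq> A - {e}" by auto
  ultimately show ?thesis by simp
qed

lemma conn_in: "e \<in> A \<Longrightarrow> conn end1 end2 A (end1 e) (end2 e)"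
  unfolding conn_def edge_rel_def by (intro r_into_rtrancl) blast

lemma SB_pw:
  assumes A: "A \<subseteq> E" and e: "e \<in> E"
  shows "mu A * (\<Sum>B\<in>Pow E. g_edge end1 end2 p q e A B * h B)
    = (\<Sum>\<sigma>\<in>Col. if A \<subseteq> FF \<sigma> then cc \<sigma> * wt p (FF \<sigma>) A * Tm p e (FF \<sigma>) h A else 0)"
proof -
  define X where "X = Tflip p e h A"
  define P where "P = {\<sigma>. e \<in> FF \<sigma>}"
  define N1 where "N1 = card (ColA A \<inter> P)"
  define N0 where "N0 = card (ColA A \<inter> - P)"
  define N where "N = card (ColA A)"
  have NN: "N = N1 + N0"
  proof -
    have "ColA A = (ColA A \<inter> P) \<union> (ColA A \<inter> - P)" by auto
    hence "card (ColA A) = card ((ColA A \<inter> P) \<union> (ColA A \<inter> - P))" by simp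
    also have "\<dots> = N1 + N0" unfolding N1_def N0_def
      by (rule card_Un_disjoint) (use finColA in auto)
    finally show ?thesis unfolding N_def .
  qed
  have N1eq: "ColA A \<inter> P = ColA (insert e A)" unfolding ColA_def P_def by auto
  have "(\<Sum>\<sigma>\<in>Col. if A \<subseteq> FF \<sigma> then cc \<sigma> * wt p (FF \<sigma>) A * Tm p e (FF \<sigma>) h A else 0)
      = (\<Sum>\<sigma>\<in>Col. if A \<subseteq> FF \<sigma> then KK A * Tm p e (FF \<sigma>) h A else 0)"
    by (intro sum.cong refl) (simp add: cw)
  also have "\<dots> = (\<Sum>\<sigma>\<in>ColA A. KK A * Tm p e (FF \<sigma>) h A)"
    unfolding ColA_def by (rule sum.inter_filter[OF finCol, symmetric])
  also have "\<dots> = KK A * (\<Sum>\<sigma>\<in>ColA A. if \<sigma> \<in> P then X else h A)"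
    unfolding sum_distrib_left Tm_def X_def P_def by simp
  also have "\<dots> = KK A * (real N1 * X + real N0 * h A)"
    unfolding sum.If_cases[OF finColA] N1_def N0_def by (simp add: Int_def Collect_mem_eq)
  finally have R: "(\<Sum>\<sigma>\<in>Col. if A \<subseteq> FF \<sigma> then cc \<sigma> * wt p (FF \<sigma>) A * Tm p e (FF \<sigma>) h A else 0)
      = KK A * (real N1 * X + real N0 * h A)" .
  have muA: "mu A = real N * KK A" unfolding mu_eq N_def ..
  show ?thesis
  proof (cases "e \<in> A")
    case True
    have c: "conn end1 end2 A (end1 e) (end2 e)" using conn_in[OF True] .
    have iA: "insert e A = A" using True by auto
    have "N1 = N" unfolding N1_def N_def N1eq iA ..
    hence N00: "N0 = 0" using NN by simp
    have g1: "g_edge end1 end2 p q e A A = p" unfolding g_edge_def using c True by auto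
    have g2: "g_edge end1 end2 p q e A (A - {e}) = 1 - p" unfolding g_edge_def using c True by auto
    show ?thesis unfolding sum2[OF A e] R muA iA g1 g2 N00 X_def Tflip_def
      using \<open>N1 = N\<close> iA by (simp add: algebra_simps)
  next
    case False
    have dA: "A - {e} = A" using False by auto
    have ne: "insert e A \<noteq> A" using False by auto
    show ?thesis
    proof (cases "conn end1 end2 A (end1 e) (end2 e)")
      case True
      have "N1 = N" unfolding N1_def N_def N1eq conn_case[OF A e True] ..
      hence N00: "N0 = 0" using NN by simp
      have g1: "g_edge end1 end2 p q e A (insert e A) = p" unfolding g_edge_def using True by auto
      have g2: "g_edge end1 end2 p q e A A = 1 - p" unfolding g_edge_def using True dA ne by auto
      show ?thesis unfolding sum2[OF A e] R muA dA g1 g2 N00 X_def Tflip_def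
        using \<open>N1 = N\<close> by (simp add: algebra_simps)
    next
      case nc: False
      have qN: "q * N1 = N" unfolding N1_def N_def N1eq using nconn_case[OF A e nc] .
      have g1: "g_edge end1 end2 p q e A (insert e A) = p / q" unfolding g_edge_def using nc by auto
      have g2: "g_edge end1 end2 p q e A A = 1 - p / q" unfolding g_edge_def using nc dA ne by auto
      have qr: "real q * real N1 = real N" using qN by (metis of_nat_mult)
      have qpos: "real q > 0" using q1 by simp
      have N0r: "real N0 = real N - real N1" using NN by simp
      show ?thesis unfolding sum2[OF A e] R muA dA g1 g2 X_def Tflip_def N0r qr[symmetric]
        using qpos by (simp add: field_simps)
    qed
  qed
qed

lemma Bf_SB: "Bf (Pow E) mu (P_SB E end1 end2 p q) f h
   = (1 / real (card E)) * (\<Sum>e\<in>E. \<Sum>\<sigma>\<in>Col. cc \<sigma> * EF p (FF \<sigma>) (\<lambda>A. f A * Tm p e (FF \<sigma>) h A))"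
proof -
  have inner: "(\<Sum>B\<in>Pow E. P_SB E end1 end2 p q A B * h B)
     = (1 / real (card E)) * (\<Sum>e\<in>E. \<Sum>B\<in>Pow E. g_edge end1 end2 p q e A B * h B)" for A
  proof -
    have "(\<Sum>B\<in>Pow E. P_SB E end1 end2 p q A B * h B)
       = (1 / real (card E)) * (\<Sum>B\<in>Pow E. \<Sum>e\<in>E. g_edge end1 end2 p q e A B * h B)"
      unfolding P_SB_def sum_distrib_left sum_distrib_right by (simp add: mult.assoc)
    also have "(\<Sum>B\<in>Pow E. \<Sum>e\<in>E. g_edge end1 end2 p q e A B * h B)
       = (\<Sum>e\<in>E. \<Sum>B\<in>Pow E. g_edge end1 end2 p q e A B * h B)" by (rule sum.swap)
    finally show ?thesis .
  qed
  have "Bf (Pow E) mu (P_SB E end1 end2 p q) f h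
     = (\<Sum>A\<in>Pow E. (1 / real (card E)) * (\<Sum>e\<in>E. f A * (mu A * (\<Sum>B\<in>Pow E. g_edge end1 end2 p q e A B * h B))))"
    unfolding Bf_alt inner by (intro sum.cong refl) (simp add: sum_distrib_left algebra_simps)
  also have "\<dots> = (\<Sum>A\<in>Pow E. (1 / real (card E)) * (\<Sum>e\<in>E. \<Sum>\<sigma>\<in>Col.
        (if A \<subseteq> FF \<sigma> then cc \<sigma> * (wt p (FF \<sigma>) A * (f A * Tm p e (FF \<sigma>) h A)) else 0)))"
  proof (intro sum.cong refl arg_cong2[where f = "(*)"])
    fix A e assume A: "A \<in> Pow E" and e: "e \<in> E"
    show "f A * (mu A * (\<Sum>B\<in>Pow E. g_edge end1 end2 p q e A B * h B)) = (\<Sum>\<sigma>\<in>Col.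
        (if A \<subseteq> FF \<sigma> then cc \<sigma> * (wt p (FF \<sigma>) A * (f A * Tm p e (FF \<sigma>) h A)) else 0))"
    proof -
      have "f A * (mu A * (\<Sum>B\<in>Pow E. g_edge end1 end2 p q e A B * h B)) = f A * (\<Sum>\<sigma>\<in>Col.
        (if A \<subseteq> FF \<sigma> then cc \<sigma> * wt p (FF \<sigma>) A * Tm p e (FF \<sigma>) h A else 0))"
        using SB_pw[OF A[simplified] e, of h] by simp
      also have "\<dots> = (\<Sum>\<sigma>\<in>Col.
        (if A \<subseteq> FF \<sigma> then cc \<sigma> * (wt p (FF \<sigma>) A * (f A * Tm p e (FF \<sigma>) h A)) else 0))"
        unfolding sum_distrib_left by (intro sum.cong refl) (simp add: algebra_simps)
      finally show ?thesis .
    qed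
  qed
  also have "\<dots> = (1 / real (card E)) * (\<Sum>A\<in>Pow E. \<Sum>e\<in>E. \<Sum>\<sigma>\<in>Col.
        (if A \<subseteq> FF \<sigma> then cc \<sigma> * (wt p (FF \<sigma>) A * (f A * Tm p e (FF \<sigma>) h A)) else 0))"
    by (simp add: sum_distrib_left)
  also have "(\<Sum>A\<in>Pow E. \<Sum>e\<in>E. \<Sum>\<sigma>\<in>Col.
        (if A \<subseteq> FF \<sigma> then cc \<sigma> * (wt p (FF \<sigma>) A * (f A * Tm p e (FF \<sigma>) h A)) else 0))
      = (\<Sum>e\<in>E. \<Sum>A\<in>Pow E. \<Sum>\<sigma>\<in>Col.
        (if A \<subseteq> FF \<sigma> then cc \<sigma> * (wt p (FF \<sigma>) A * (f A * Tm p e (FF \<sigma>) h A)) else 0))"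
    by (rule sum.swap)
  also have "\<dots> = (\<Sum>e\<in>E. \<Sum>\<sigma>\<in>Col. \<Sum>A\<in>Pow E.
        (if A \<subseteq> FF \<sigma> then cc \<sigma> * (wt p (FF \<sigma>) A * (f A * Tm p e (FF \<sigma>) h A)) else 0))"
    by (intro sum.cong refl sum.swap)
  also have "\<dots> = (\<Sum>e\<in>E. \<Sum>\<sigma>\<in>Col. cc \<sigma> * EF p (FF \<sigma>) (\<lambda>A. f A * Tm p e (FF \<sigma>) h A))"
  proof (intro sum.cong refl)
    fix e \<sigma>
    show "(\<Sum>A\<in>Pow E. (if A \<subseteq> FF \<sigma> then cc \<sigma> * (wt p (FF \<sigma>) A * (f A * Tm p e (FF \<sigma>) h A)) else 0))
        = cc \<sigma> * EF p (FF \<sigma>) (\<lambda>A. f A * Tm p e (FF \<sigma>) h A)"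
      unfolding EF_ext[symmetric] sum_distrib_left by (intro sum.cong refl) simp
  qed
  finally show ?thesis .
qed

end

context rc begin

lemma symSW: "Bf (Pow E) mu (P_SW V E end1 end2 p q) f g = Bf (Pow E) mu (P_SW V E end1 end2 p q) g f"
  unfolding Bf_SW by (simp add: mult.commute)

lemma symSB: "Bf (Pow E) mu (P_SB E end1 end2 p q) f g = Bf (Pow E) mu (P_SB E end1 end2 p q) g f"
proof -
  have "\<And>\<sigma> e. EF p (FF \<sigma>) (\<lambda>A. f A * Tm p e (FF \<sigma>) g A) = EF p (FF \<sigma>) (\<lambda>A. g A * Tm p e (FF \<sigma>) f A)"
    by (rule symT[OF finFF])
  thus ?thesis unfolding Bf_SB by (simp only:)
qed

lemma Tm_one: "Tm p e F (\<lambda>_. 1) A = 1"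
  unfolding Tm_def Tflip_def by simp

lemma mpos: "0 < real (card E)" using finE Ene by (simp add: card_gt_0_iff)

lemma poneSW: "Bf (Pow E) mu (P_SW V E end1 end2 p q) f (\<lambda>_. 1) = ip (Pow E) mu (\<lambda>_. 1) f"
  unfolding Bf_SW ip_mu using EF_const[OF finFF] by simp

lemma poneSB: "Bf (Pow E) mu (P_SB E end1 end2 p q) f (\<lambda>_. 1) = ip (Pow E) mu (\<lambda>_. 1) f"
  unfolding Bf_SB ip_mu Tm_one using mpos by simp

lemma ipff: "ip (Pow E) mu f f = (\<Sum>\<sigma>\<in>Col. cc \<sigma> * EF p (FF \<sigma>) (\<lambda>A. (f A)^2))"
  unfolding ip_mu by (simp add: power2_eq_square)

lemma SWff: "Bf (Pow E) mu (P_SW V E end1 end2 p q) f f = (\<Sum>\<sigma>\<in>Col. cc \<sigma> * (EF p (FF \<sigma>) f)^2)"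
  unfolding Bf_SW by (simp add: power2_eq_square)

lemma psdSW: "0 \<le> Bf (Pow E) mu (P_SW V E end1 end2 p q) f f"
  unfolding SWff by (intro sum_nonneg mult_nonneg_nonneg cc_nonneg) auto

lemma ineq_a: "Bf (Pow E) mu (P_SW V E end1 end2 p q) f f \<le> Bf (Pow E) mu (P_SB E end1 end2 p q) f f"
proof -
  have "Bf (Pow E) mu (P_SW V E end1 end2 p q) f f
      = (1 / real (card E)) * (\<Sum>e\<in>E. \<Sum>\<sigma>\<in>Col. cc \<sigma> * (EF p (FF \<sigma>) f)^2)"
    unfolding SWff using mpos by simp
  also have "\<dots> \<le> (1 / real (card E)) * (\<Sum>e\<in>E. \<Sum>\<sigma>\<in>Col. cc \<sigma> * EF p (FF \<sigma>) (\<lambda>A. f A * Tm p e (FF \<sigma>) f A))"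
    using p0 p1 by (intro mult_left_mono sum_mono mult_left_mono cc_nonneg lowerT finFF) auto
  finally show ?thesis unfolding Bf_SB .
qed

lemma psdSB: "0 \<le> Bf (Pow E) mu (P_SB E end1 end2 p q) f f"
  using psdSW[of f] ineq_a[of f] by linarith

lemma ineq_b: "ip (Pow E) mu f f - Bf (Pow E) mu (P_SW V E end1 end2 p q) f f
   \<le> real (card E) * (ip (Pow E) mu f f - Bf (Pow E) mu (P_SB E end1 end2 p q) f f)"
proof -
  define D where "D = (\<lambda>\<sigma> e. EF p (FF \<sigma>) (\<lambda>A. (f A)^2) - EF p (FF \<sigma>) (\<lambda>A. f A * Tm p e (FF \<sigma>) f A))"
  have pp: "0 \<le> p" "p \<le> 1" using p0 p1 by auto
  have ES': "EF p (FF \<sigma>) (\<lambda>A. (f A)^2) - (EF p (FF \<sigma>) f)^2 \<le> (\<Sum>e\<in>E. D \<sigma> e)" for \<sigma>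
  proof -
    have "(\<Sum>e\<in>E. D \<sigma> e) = (\<Sum>e\<in>FF \<sigma>. D \<sigma> e)"
    proof (rule sum.mono_neutral_right[OF finE FF_sub])
      show "\<forall>e\<in>E - FF \<sigma>. D \<sigma> e = 0" unfolding D_def Tm_def by (simp add: power2_eq_square)
    qed
    also have "\<dots> = (\<Sum>e\<in>FF \<sigma>. EF p (FF \<sigma>) (\<lambda>A. (f A)^2) - EF p (FF \<sigma>) (\<lambda>A. f A * Tflip p e f A))"
      unfolding D_def Tm_def by (intro sum.cong refl) simp
    finally show ?thesis using ES[OF finFF pp, where f = f] by simp
  qed
  have "ip (Pow E) mu f f - Bf (Pow E) mu (P_SW V E end1 end2 p q) f f
     = (\<Sum>\<sigma>\<in>Col. cc \<sigma> * (EF p (FF \<sigma>) (\<lambda>A. (f A)^2) - (EF p (FF \<sigma>) f)^2))"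
    unfolding ipff SWff by (simp add: sum_subtractf right_diff_distrib)
  also have "\<dots> \<le> (\<Sum>\<sigma>\<in>Col. cc \<sigma> * (\<Sum>e\<in>E. D \<sigma> e))"
    by (intro sum_mono mult_left_mono cc_nonneg ES')
  also have "\<dots> = (\<Sum>e\<in>E. \<Sum>\<sigma>\<in>Col. cc \<sigma> * D \<sigma> e)"
    unfolding sum_distrib_left by (rule sum.swap)
  also have "\<dots> = real (card E) * ip (Pow E) mu f f
      - (\<Sum>e\<in>E. \<Sum>\<sigma>\<in>Col. cc \<sigma> * EF p (FF \<sigma>) (\<lambda>A. f A * Tm p e (FF \<sigma>) f A))"
    unfolding D_def ipff by (simp add: right_diff_distrib sum_subtractf)
  also have "\<dots> = real (card E) * (ip (Pow E) mu f f - Bf (Pow E) mu (P_SB E end1 end2 p q) f f)"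
    unfolding Bf_SB using mpos by (simp add: right_diff_distrib)
  finally show ?thesis .
qed

definition "sig0 = (\<lambda>x\<in>V. (1::nat))"

lemma sig0: "sig0 \<in> Col" "FF sig0 = E" "cc sig0 = 1"
proof -
  show "sig0 \<in> Col" unfolding sig0_def Col_def using q1 by auto
  show F: "FF sig0 = E" using FF_sub ends unfolding sig0_def by (auto simp: in_FF)
  show "cc sig0 = 1" unfolding cc_def F by simp
qed

lemma sum_mu_pos: "0 < (\<Sum>A\<in>Pow E. mu A)"
  using finE mu_pos by (intro sum_pos) auto

lemma irrSW:
  assumes f1: "ip (Pow E) mu (\<lambda>_. 1) f = 0" and nz: "\<exists>A\<in>Pow E. f A \<noteq> 0"
  shows "Bf (Pow E) mu (P_SW V E end1 end2 p q) f f < ip (Pow E) mu f f"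
proof (rule ccontr)
  assume "\<not> ?thesis"
  hence le: "ip (Pow E) mu f f - Bf (Pow E) mu (P_SW V E end1 end2 p q) f f \<le> 0" by simp
  define W where "W = (\<lambda>\<sigma>. cc \<sigma> * (EF p (FF \<sigma>) (\<lambda>A. (f A)^2) - (EF p (FF \<sigma>) f)^2))"
  have eq: "ip (Pow E) mu f f - Bf (Pow E) mu (P_SW V E end1 end2 p q) f f = (\<Sum>\<sigma>\<in>Col. W \<sigma>)"
    unfolding ipff SWff W_def by (simp add: sum_subtractf right_diff_distrib)
  have W0: "\<forall>\<sigma>\<in>Col. 0 \<le> W \<sigma>"
    unfolding W_def using jensen[OF finFF, of p] p0 p1 cc_nonneg by (auto intro!: mult_nonneg_nonneg)
  have "0 \<le> (\<Sum>\<sigma>\<in>Col. W \<sigma>)" by (rule sum_nonneg) (use W0 in auto)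
  hence "(\<Sum>\<sigma>\<in>Col. W \<sigma>) = 0" using le eq by linarith
  hence "W sig0 = 0" using sum_nonneg_eq_0_iff[OF finCol] W0 sig0(1) by blast
  hence "EF p E (\<lambda>A. (f A)^2) = (EF p E f)^2" unfolding W_def sig0(2,3) by simp
  hence const: "\<forall>A\<subseteq>E. f A = EF p E f" using EF_zero_var[OF finE p0 p1] by blast
  have "ip (Pow E) mu (\<lambda>_. 1) f = EF p E f * (\<Sum>A\<in>Pow E. mu A)"
    unfolding ip_def sum_distrib_left using const by (intro sum.cong refl) auto
  hence "EF p E f = 0" using f1 sum_mu_pos by simp
  thus False using nz const by auto
qed

lemma irrSB:
  assumes f1: "ip (Pow E) mu (\<lambda>_. 1) f = 0" and nz: "\<exists>A\<in>Pow E. f A \<noteq> 0"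
  shows "Bf (Pow E) mu (P_SB E end1 end2 p q) f f < ip (Pow E) mu f f"
proof -
  have "0 < ip (Pow E) mu f f - Bf (Pow E) mu (P_SW V E end1 end2 p q) f f" using irrSW[OF f1 nz] by simp
  also have "\<dots> \<le> real (card E) * (ip (Pow E) mu f f - Bf (Pow E) mu (P_SB E end1 end2 p q) f f)"
    by (rule ineq_b)
  finally show ?thesis using mpos by (simp add: zero_less_mult_iff)
qed

lemma ntriv: "\<exists>f. ip (Pow E) mu (\<lambda>_. 1) f = 0 \<and> (\<exists>A\<in>Pow E. f A \<noteq> 0)"
proof -
  define f where "f = (\<lambda>A. if A = {} then mu E else if A = E then - mu {} else 0)"
  have ne: "{} \<noteq> E" using Ene by auto
  have "ip (Pow E) mu (\<lambda>_. 1) f = (\<Sum>A\<in>{{}, E}. mu A * 1 * f A)"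
    unfolding ip_def using finE by (intro sum.mono_neutral_right) (auto simp: f_def)
  also have "\<dots> = 0" using ne unfolding f_def by simp
  finally have "ip (Pow E) mu (\<lambda>_. 1) f = 0" .
  moreover have "f {} \<noteq> 0" unfolding f_def using mu_pos[of E] by simp
  ultimately show ?thesis by blast
qed

end

lemma ln3: "1 \<le> 8 * ln (real m)" if "m \<ge> 3" for m :: nat
proof -
  have "ln (1/3 :: real) \<le> 1/3 - 1" by (rule ln_le_minus_one) simp
  moreover have "ln (1/3 :: real) = - ln 3" using ln_inverse[of "3::real"] by (simp add: inverse_eq_divide)
  moreover have "ln (3::real) \<le> ln (real m)" using that by simp
  ultimately show ?thesis by linarith
qed

theorem theorem4p8:
  fixes V :: "'v set" and E :: "'e set" and end1 end2 :: "'e \<Rightarrow> 'v"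
    and p :: real and q :: nat
  assumes "finite V" and "finite E"
    and "\<forall>e \<in> E. end1 e \<in> V \<and> end2 e \<in> V"
    and "card E \<ge> 3"
    and "0 < p" and "p < 1"
    and "q \<ge> 1"
  shows "spectral_gap (Pow E) (P_SB E end1 end2 p q)
           \<le> spectral_gap (Pow E) (P_SW V E end1 end2 p q)
       \<and> spectral_gap (Pow E) (P_SW V E end1 end2 p q)
           \<le> 8 * real (card E) * ln (real (card E)) * spectral_gap (Pow E) (P_SB E end1 end2 p q)"
proof -
  have Ene: "E \<noteq> {}" using assms(4) by auto
  interpret rc V E end1 end2 p q using assms Ene by unfold_locales auto
  have finS: "finite (Pow E)" using finE by simp
  have muS: "\<forall>x\<in>Pow E. mu x > 0" using mu_pos by auto
  obtain r1 where SW: "spectral_gap (Pow E) (P_SW V E end1 end2 p q) = 1 - r1"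
    and MAX1: "\<forall>f. ip (Pow E) mu (\<lambda>_. 1) f = 0 \<longrightarrow> Bf (Pow E) mu (P_SW V E end1 end2 p q) f f \<le> r1 * ip (Pow E) mu f f"
    and g1: "\<exists>g. ip (Pow E) mu (\<lambda>_. 1) g = 0 \<and> (\<exists>x\<in>Pow E. g x \<noteq> 0) \<and> Bf (Pow E) mu (P_SW V E end1 end2 p q) g g = r1 * ip (Pow E) mu g g"
    using spectral[OF finS muS, of "P_SW V E end1 end2 p q"] symSW poneSW psdSW irrSW ntriv by blast
  obtain r2 where SB: "spectral_gap (Pow E) (P_SB E end1 end2 p q) = 1 - r2" and r2: "r2 < 1"
    and MAX2: "\<forall>f. ip (Pow E) mu (\<lambda>_. 1) f = 0 \<longrightarrow> Bf (Pow E) mu (P_SB E end1 end2 p q) f f \<le> r2 * ip (Pow E) mu f f"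
    and g2: "\<exists>g. ip (Pow E) mu (\<lambda>_. 1) g = 0 \<and> (\<exists>x\<in>Pow E. g x \<noteq> 0) \<and> Bf (Pow E) mu (P_SB E end1 end2 p q) g g = r2 * ip (Pow E) mu g g"
    using spectral[OF finS muS, of "P_SB E end1 end2 p q"] symSB poneSB psdSB irrSB ntriv by blast
  have A: "r1 \<le> r2"
  proof -
    from g1 obtain g where g: "ip (Pow E) mu (\<lambda>_. 1) g = 0" "\<exists>x\<in>Pow E. g x \<noteq> 0"
      "Bf (Pow E) mu (P_SW V E end1 end2 p q) g g = r1 * ip (Pow E) mu g g" by blast
    have pos: "0 < ip (Pow E) mu g g" using ip_pos[OF finS muS g(2)] .
    have "r1 * ip (Pow E) mu g g \<le> r2 * ip (Pow E) mu g g"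
      using g(3) ineq_a[of g] MAX2 g(1) by fastforce
    thus ?thesis using pos by simp
  qed
  have B: "1 - r1 \<le> real (card E) * (1 - r2)"
  proof -
    from g2 obtain g where g: "ip (Pow E) mu (\<lambda>_. 1) g = 0" "\<exists>x\<in>Pow E. g x \<noteq> 0"
      "Bf (Pow E) mu (P_SB E end1 end2 p q) g g = r2 * ip (Pow E) mu g g" by blast
    have pos: "0 < ip (Pow E) mu g g" using ip_pos[OF finS muS g(2)] .
    have "(1 - r1) * ip (Pow E) mu g g \<le> ip (Pow E) mu g g - Bf (Pow E) mu (P_SW V E end1 end2 p q) g g"
      using MAX1 g(1) by (simp add: algebra_simps)
    also have "\<dots> \<le> real (card E) * (ip (Pow E) mu g g - Bf (Pow E) mu (P_SB E end1 end2 p q) g g)"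
      by (rule ineq_b)
    also have "\<dots> = (real (card E) * (1 - r2)) * ip (Pow E) mu g g" unfolding g(3) by (simp add: algebra_simps)
    finally show ?thesis using pos by simp
  qed
  have C: "real (card E) * (1 - r2) \<le> 8 * real (card E) * ln (real (card E)) * (1 - r2)"
  proof -
    have "0 \<le> real (card E) * (1 - r2)" using r2 by simp
    hence "real (card E) * (1 - r2) * 1 \<le> real (card E) * (1 - r2) * (8 * ln (real (card E)))"
      using ln3[OF assms(4)] by (intro mult_left_mono) auto
    thus ?thesis by (simp add: algebra_simps)
  qed
  show ?thesis unfolding SW SB using A B C by simp
qed

end
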